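(* In the standing local setup, fix a leaf $z\mapsto(z,f(z))$ and equip the (trivial) holomorphic bundle $f^*T^{1,0}M$ over the leaf with the Hermitian metric $g_{\alpha\bar\beta}$ of $\omega_{\phi(z,\cdot)}$. Its Chern curvature $F^r{}_\alpha=-\partial_{\bar z}\big(g^{r\bar\delta}\partial_z g_{\alpha\bar\delta}\big)$ (derivatives taken along the leaf) equals $-\frac{\partial\eta^r}{\partial\bar w_i}\,\frac{\partial\eta^{\bar i}}{\partial w_\alpha}$, and it is non-positive: $F(s,s)=F^\alpha{}_\beta s^\beta\overline{s^\gamma}g_{\alpha\bar\gamma}\le0$ for every section $s$.
   Context: Standing local setup: $(M,\omega_0)$ is a Kähler manifold of complex dimension $n$, $\Sigma\subset\mathbb C$ a domain with coordinate $z$, and $\phi$ a smooth real function on $\Sigma\times M$ such that $\omega_\phi=\omega_0+\sqrt{-1}\partial\bar\partial_M\phi(z,\cdot)>0$ on $M$ for each $z$ and $(\pi_2^*\omega_0+\sqrt{-1}\partial\bar\partial\phi)^{n+1}=0$ on $\Sigma\times M$. In local holomorphic coordinates $w=(w_1,\dots,w_n)$ on $M$ write $g_{\alpha\bar\beta}=g_{0,\alpha\bar\beta}+\partial^2\phi/\partial w_\alpha\partial\bar w_\beta$ (the metric of $\omega_\phi$), $(g^{\alpha\bar\beta})$ its inverse, $\eta^\alpha=-g^{\alpha\bar\beta}\,\partial^2\phi/\partial z\partial\bar w_\beta$, $\eta^{\bar\alpha}=\overline{\eta^\alpha}$, $X=\eta^\alpha\partial/\partial w_\alpha$ (leaf vector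 field; $\partial/\partial z+X$ spans the kernel of $\pi_2^*\omega_0+\sqrt{-1}\partial\bar\partial\phi$), $\partial_z=\partial/\partial z+\eta^\alpha\partial/\partial w_\alpha$ and $\overline{\partial_z}=\partial/\partial\bar z+\eta^{\bar\alpha}\partial/\partial\bar w_\alpha$; summation over repeated indices. Integral curves of $\partial_z$ are holomorphic curves $z\mapsto(z,f(z))$ with $f'=\eta$ (the leaves). *)

theory Defs
  imports "HOL-Analysis.Analysis"
begin

text \<open>Local model: a coordinate chart U of M is an open subset of complex^'n
 (complex dimension n = CARD('n)); points of \<Sigma> \<times> U are pairs (z, w).\<close>

definition pd :: "'a::real_normed_vector \<Rightarrow> ('a \<Rightarrow> 'b::real_normed_vector) \<Rightarrow> 'a \<Rightarrow> 'b" where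
  "pd v f p = frechet_derivative f (at p) v"

fun iter_pd :: "'a::real_normed_vector list \<Rightarrow> ('a \<Rightarrow> 'b::real_normed_vector) \<Rightarrow> 'a \<Rightarrow> 'b" where
  "iter_pd [] f = f"
| "iter_pd (v # vs) f = pd v (iter_pd vs f)"

definition smooth_on :: "'a::euclidean_space set \<Rightarrow> ('a \<Rightarrow> 'b::real_normed_vector) \<Rightarrow> bool" where
  "smooth_on S f \<longleftrightarrow> open S \<and>
     (\<forall>vs. set vs \<subseteq> Basis \<longrightarrow> (iter_pd vs f) differentiable_on S \<and> continuous_on S (iter_pd vs f))"

definition dZ :: "(complex \<times> (complex^'n) \<Rightarrow> complex) \<Rightarrow> complex \<times> (complex^'n) \<Rightarrow> complex" where
  "dZ F p = (pd (1, 0) F p - \<i> * pd (\<i>, 0) F p) / 2"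
definition dZb :: "(complex \<times> (complex^'n) \<Rightarrow> complex) \<Rightarrow> complex \<times> (complex^'n) \<Rightarrow> complex" where
  "dZb F p = (pd (1, 0) F p + \<i> * pd (\<i>, 0) F p) / 2"
definition dW :: "'n::finite \<Rightarrow> (complex \<times> (complex^'n) \<Rightarrow> complex) \<Rightarrow> complex \<times> (complex^'n) \<Rightarrow> complex" where
  "dW a F p = (pd (0, axis a 1) F p - \<i> * pd (0, axis a \<i>) F p) / 2"
definition dWb :: "'n::finite \<Rightarrow> (complex \<times> (complex^'n) \<Rightarrow> complex) \<Rightarrow> complex \<times> (complex^'n) \<Rightarrow> complex" where
  "dWb a F p = (pd (0, axis a 1) F p + \<i> * pd (0, axis a \<i>) F p) / 2"

definition dWv :: "'n::finite \<Rightarrow> (complex^'n \<Rightarrow> complex) \<Rightarrow> complex^'n \<Rightarrow> complex" where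
  "dWv a h w = (pd (axis a 1) h w - \<i> * pd (axis a \<i>) h w) / 2"

definition wz :: "(complex \<Rightarrow> complex) \<Rightarrow> complex \<Rightarrow> complex" where
  "wz h z = (pd 1 h z - \<i> * pd \<i> h z) / 2"
definition wzb :: "(complex \<Rightarrow> complex) \<Rightarrow> complex \<Rightarrow> complex" where
  "wzb h z = (pd 1 h z + \<i> * pd \<i> h z) / 2"

text \<open>Kaehler metric on the chart: g0 w a b = g_{0,a bbar}(w).\<close>
definition kaehler_metric_on :: "(complex^'n) set \<Rightarrow> (complex^'n \<Rightarrow> 'n::finite \<Rightarrow> 'n \<Rightarrow> complex) \<Rightarrow> bool" where
  "kaehler_metric_on U g0 \<longleftrightarrow> open U \<and>
     (\<forall>a b. smooth_on U (\<lambda>w. g0 w a b)) \<and>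
     (\<forall>w\<in>U. \<forall>a b. cnj (g0 w a b) = g0 w b a) \<and>
     (\<forall>w\<in>U. \<forall>v::complex^'n. v \<noteq> 0 \<longrightarrow> Re (\<Sum>a\<in>UNIV. \<Sum>b\<in>UNIV. g0 w a b * v$a * cnj (v$b)) > 0) \<and>
     (\<forall>w\<in>U. \<forall>a b c. dWv c (\<lambda>u. g0 u a b) w = dWv a (\<lambda>u. g0 u c b) w)"

definition phic :: "(complex \<times> (complex^'n) \<Rightarrow> real) \<Rightarrow> complex \<times> (complex^'n) \<Rightarrow> complex" where
  "phic \<phi> p = complex_of_real (\<phi> p)"

definition gmet :: "(complex^'n \<Rightarrow> 'n::finite \<Rightarrow> 'n \<Rightarrow> complex) \<Rightarrow> (complex \<times> (complex^'n) \<Rightarrow> real)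
    \<Rightarrow> complex \<times> (complex^'n) \<Rightarrow> 'n \<Rightarrow> 'n \<Rightarrow> complex" where
  "gmet g0 \<phi> p a b = g0 (snd p) a b + dW a (dWb b (phic \<phi>)) p"

definition gmat :: "(complex^'n \<Rightarrow> 'n::finite \<Rightarrow> 'n \<Rightarrow> complex) \<Rightarrow> (complex \<times> (complex^'n) \<Rightarrow> real)
    \<Rightarrow> complex \<times> (complex^'n) \<Rightarrow> complex^'n^'n" where
  "gmat g0 \<phi> p = (\<chi> a b. gmet g0 \<phi> p a b)"

text \<open>Inverse metric g^{a bbar}, normalised by  sum_b g^{a bbar} g_{c bbar} = delta_{ac}.\<close>
definition ginv :: "(complex^'n \<Rightarrow> 'n::finite \<Rightarrow> 'n \<Rightarrow> complex) \<Rightarrow> (complex \<times> (complex^'n) \<Rightarrow> real)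
    \<Rightarrow> complex \<times> (complex^'n) \<Rightarrow> 'n \<Rightarrow> 'n \<Rightarrow> complex" where
  "ginv g0 \<phi> p a b = matrix_inv (transpose (gmat g0 \<phi> p)) $ a $ b"

definition eta :: "(complex^'n \<Rightarrow> 'n::finite \<Rightarrow> 'n \<Rightarrow> complex) \<Rightarrow> (complex \<times> (complex^'n) \<Rightarrow> real)
    \<Rightarrow> 'n \<Rightarrow> complex \<times> (complex^'n) \<Rightarrow> complex" where
  "eta g0 \<phi> a p = - (\<Sum>b\<in>UNIV. ginv g0 \<phi> p a b * dZ (dWb b (phic \<phi>)) p)"

definition etab :: "(complex^'n \<Rightarrow> 'n::finite \<Rightarrow> 'n \<Rightarrow> complex) \<Rightarrow> (complex \<times> (complex^'n) \<Rightarrow> real)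
    \<Rightarrow> 'n \<Rightarrow> complex \<times> (complex^'n) \<Rightarrow> complex" where
  "etab g0 \<phi> a p = cnj (eta g0 \<phi> a p)"

text \<open>Coefficient matrix of the (1,1)-form pi_2^* omega_0 + i dd-bar phi on \<Sigma> \<times> U
 (index None = z-direction, Some a = w_a-direction).  Its (n+1)-st power is
 (n+1)! i^(n+1) det(this matrix) times the coordinate volume form.\<close>
definition MAmat :: "(complex^'n \<Rightarrow> 'n::finite \<Rightarrow> 'n \<Rightarrow> complex) \<Rightarrow> (complex \<times> (complex^'n) \<Rightarrow> real)
    \<Rightarrow> complex \<times> (complex^'n) \<Rightarrow> complex^('n option)^('n option)" where
  "MAmat g0 \<phi> p = (\<chi> i j. case (i, j) of
      (None, None) \<Rightarrow> dZ (dZb (phic \<phi>)) p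
    | (None, Some b) \<Rightarrow> dZ (dWb b (phic \<phi>)) p
    | (Some a, None) \<Rightarrow> dW a (dZb (phic \<phi>)) p
    | (Some a, Some b) \<Rightarrow> gmet g0 \<phi> p a b)"

definition leaf_curv :: "(complex^'n \<Rightarrow> 'n::finite \<Rightarrow> 'n \<Rightarrow> complex) \<Rightarrow> (complex \<times> (complex^'n) \<Rightarrow> real)
    \<Rightarrow> (complex \<Rightarrow> complex^'n) \<Rightarrow> 'n \<Rightarrow> 'n \<Rightarrow> complex \<Rightarrow> complex" where
  "leaf_curv g0 \<phi> f r a z =
     - wzb (\<lambda>t. \<Sum>d\<in>UNIV. ginv g0 \<phi> (t, f t) r d * wz (\<lambda>s. gmet g0 \<phi> (s, f s) a d) t) z"

end

theory Submission
  imports Defs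
begin

lemma pd_has: "f differentiable (at x) \<Longrightarrow> (f has_derivative (\<lambda>v. pd v f x)) (at x)"
  unfolding pd_def using frechet_derivative_works by blast

lemma pd_eq: "(f has_derivative f') (at x) \<Longrightarrow> pd v f x = f' v"
  unfolding pd_def using frechet_derivative_at by metis

lemma pd_cong:
  assumes "open S" "x \<in> S" "\<And>y. y \<in> S \<Longrightarrow> f y = g y"
  shows "pd v f x = pd v g x"
proof -
  have "\<And>f'. (f has_derivative f') (at x) \<longleftrightarrow> (g has_derivative f') (at x)"
    using has_derivative_transform_within_open assms by (metis)
  then have "frechet_derivative f (at x) = frechet_derivative g (at x)"
    unfolding frechet_derivative_def by simp
  then show ?thesis unfolding pd_def by simp
qed

lemma pd_linear:
  assumes "f differentiable (at x)"
  shows "pd (u + v) f x = pd u f x + pd v f x" "pd (r *\<^sub>R u) f x = r *\<^sub>R pd u f x"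
proof -
  have "bounded_linear (\<lambda>v. pd v f x)" using pd_has[OF assms] has_derivative_bounded_linear by blast
  then interpret bounded_linear "\<lambda>v. pd v f x" .
  show "pd (u + v) f x = pd u f x + pd v f x" by (rule add)
  show "pd (r *\<^sub>R u) f x = r *\<^sub>R pd u f x" by (rule scaleR)
qed

fun Ck :: "nat \<Rightarrow> 'a::real_normed_vector set \<Rightarrow> ('a \<Rightarrow> 'b::real_normed_vector) \<Rightarrow> bool" where
  "Ck 0 S f = continuous_on S f"
| "Ck (Suc k) S f = ((\<forall>x\<in>S. f differentiable (at x)) \<and> (\<forall>v. Ck k S (pd v f)))"

definition sm where "sm S f \<longleftrightarrow> (\<forall>k. Ck k S f)"

lemma Ck_cong:
  assumes "open S" "\<And>x. x \<in> S \<Longrightarrow> f x = g x" "Ck k S f"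
  shows "Ck k S g"
  using assms(2,3)
proof (induction k arbitrary: f g)
  case 0
  then show ?case using continuous_on_cong by fastforce
next
  case (Suc k)
  have d: "g differentiable (at x)" if "x \<in> S" for x
    using Suc.prems that has_derivative_transform_within_open[OF _ assms(1) that]
    unfolding differentiable_def by (metis Ck.simps(2) differentiable_def)
  have "Ck k S (pd v g)" for v
    using Suc.IH[of "pd v f" "pd v g"] Suc.prems pd_cong[OF assms(1), of _ f g] by auto
  with d show ?case by simp
qed

lemma Ck_mono: "Ck (Suc k) S f \<Longrightarrow> Ck k S f"
proof (induction k arbitrary: f)
  case 0
  then show ?case
    by (auto intro!: continuous_at_imp_continuous_on differentiable_imp_continuous_within)
next
  case (Suc k)
  then show ?case by auto
qed

lemma Ck_le: "Ck k S f \<Longrightarrow> m \<le> k \<Longrightarrow> Ck m S f"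
proof (induction k)
  case 0 thus ?case by simp
next
  case (Suc k) thus ?case by (metis Ck_mono le_Suc_eq)
qed

lemma Ck_linear:
  assumes "open S" "bounded_linear L" "Ck k S f"
  shows "Ck k S (\<lambda>x. L (f x))"
  using assms(3)
proof (induction k arbitrary: f)
  case 0
  then show ?case
    using bounded_linear.continuous_on[OF assms(2)] by simp
next
  case (Suc k)
  have h: "((\<lambda>x. L (f x)) has_derivative (\<lambda>v. L (pd v f x))) (at x)" if "x \<in> S" for x
    using bounded_linear.has_derivative[OF assms(2) pd_has] Suc.prems that by auto
  have "Ck k S (pd v (\<lambda>x. L (f x)))" for v
    apply (rule Ck_cong[OF assms(1), of "\<lambda>x. L (pd v f x)"])
    using pd_eq[OF h] Suc by auto
  then show ?case using h by (simp add: differentiable_def) blast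
qed

lemma Ck_const: "open S \<Longrightarrow> Ck k S (\<lambda>x. c)"
proof (induction k arbitrary: c)
  case 0
  then show ?case by simp
next
  case (Suc k)
  have "Ck k S (pd v (\<lambda>x. c))" for v
    apply (rule Ck_cong[OF Suc.prems, of "\<lambda>x. 0"])
    using pd_eq[OF has_derivative_const] Suc by auto
  then show ?case by simp
qed

lemma Ck_add:
  assumes "open S" "Ck k S f" "Ck k S g"
  shows "Ck k S (\<lambda>x. f x + g x)"
  using assms(2,3)
proof (induction k arbitrary: f g)
  case 0
  then show ?case by (simp add: continuous_on_add)
next
  case (Suc k)
  have h: "((\<lambda>x. f x + g x) has_derivative (\<lambda>v. pd v f x + pd v g x)) (at x)" if "x \<in> S" for x
    using Suc.prems that by (auto intro!: has_derivative_add pd_has)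
  have "Ck k S (pd v (\<lambda>x. f x + g x))" for v
    apply (rule Ck_cong[OF assms(1), of "\<lambda>x. pd v f x + pd v g x"])
    using pd_eq[OF h] Suc by auto
  then show ?case using h by (simp add: differentiable_def) blast
qed

lemma Ck_mult:
  fixes f g :: "'a::real_normed_vector \<Rightarrow> 'b::real_normed_algebra"
  assumes "open S" "Ck k S f" "Ck k S g"
  shows "Ck k S (\<lambda>x. f x * g x)"
  using assms(2,3)
proof (induction k arbitrary: f g)
  case 0
  then show ?case by (simp add: continuous_on_mult)
next
  case (Suc k)
  have h: "((\<lambda>x. f x * g x) has_derivative (\<lambda>v. f x * pd v g x + pd v f x * g x)) (at x)" if "x \<in> S" for x
    using Suc.prems that by (auto intro!: has_derivative_mult pd_has)
  have fk: "Ck k S f" "Ck k S g" using Suc.prems Ck_mono by blast+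
  have "Ck k S (pd v (\<lambda>x. f x * g x))" for v
    apply (rule Ck_cong[OF assms(1), of "\<lambda>x. f x * pd v g x + pd v f x * g x"])
    using pd_eq[OF h] apply auto[2]
    apply (rule Ck_add[OF assms(1)])
    using Suc.IH[OF fk(1)] Suc.IH[OF _ fk(2)] Suc.prems by auto
  then show ?case using h by (simp add: differentiable_def) blast
qed

lemma Ck_inverse:
  fixes f :: "'a::real_normed_vector \<Rightarrow> 'b::real_normed_div_algebra"
  assumes "open S" "Ck k S f" "\<And>x. x \<in> S \<Longrightarrow> f x \<noteq> 0"
  shows "Ck k S (\<lambda>x. inverse (f x))"
  using assms(2,3)
proof (induction k arbitrary: f)
  case 0
  then show ?case by (auto intro!: continuous_on_inverse)
next
  case (Suc k)
  have h: "((\<lambda>x. inverse (f x)) has_derivative (\<lambda>v. - (inverse (f x) * pd v f x * inverse (f x)))) (at x)" if "x \<in> S" for x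
    using Suc.prems that by (auto intro!: Deriv.has_derivative_inverse pd_has)
  have fi: "Ck k S (\<lambda>x. inverse (f x))" using Suc Ck_mono by blast
  have "Ck k S (pd v (\<lambda>x. inverse (f x)))" for v
    apply (rule Ck_cong[OF assms(1), of "\<lambda>x. - (inverse (f x) * pd v f x * inverse (f x))"])
    using pd_eq[OF h] apply auto[2]
    apply (rule Ck_linear[OF assms(1) bounded_linear_minus[OF bounded_linear_ident], simplified])
    apply (rule Ck_mult[OF assms(1)])+
    using Suc fi by auto
  then show ?case using h by (simp add: differentiable_def) blast
qed

lemma sm_const[simp]: "open S \<Longrightarrow> sm S (\<lambda>x. c)" by (simp add: sm_def Ck_const)
lemma sm_add: "open S \<Longrightarrow> sm S f \<Longrightarrow> sm S g \<Longrightarrow> sm S (\<lambda>x. f x + g x)" by (simp add: sm_def Ck_add)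
lemma sm_linear: "open S \<Longrightarrow> bounded_linear L \<Longrightarrow> sm S f \<Longrightarrow> sm S (\<lambda>x. L (f x))" by (simp add: sm_def Ck_linear)
lemma sm_mult:
  fixes f g :: "'a::real_normed_vector \<Rightarrow> 'b::real_normed_algebra"
  shows "open S \<Longrightarrow> sm S f \<Longrightarrow> sm S g \<Longrightarrow> sm S (\<lambda>x. f x * g x)" by (simp add: sm_def Ck_mult)
lemma sm_inverse:
  fixes f :: "'a::real_normed_vector \<Rightarrow> 'b::real_normed_div_algebra"
  shows "open S \<Longrightarrow> sm S f \<Longrightarrow> (\<And>x. x \<in> S \<Longrightarrow> f x \<noteq> 0) \<Longrightarrow> sm S (\<lambda>x. inverse (f x))"
  by (simp add: sm_def Ck_inverse)
lemma sm_pd: "sm S f \<Longrightarrow> sm S (pd v f)"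
  unfolding sm_def by (metis Ck.simps(2))
lemma sm_differentiable: "sm S f \<Longrightarrow> x \<in> S \<Longrightarrow> f differentiable (at x)"
  unfolding sm_def by (metis Ck.simps(2))
lemma sm_cont: "sm S f \<Longrightarrow> continuous_on S f"
  unfolding sm_def by (metis Ck.simps(1))
lemma sm_cong: "open S \<Longrightarrow> (\<And>x. x \<in> S \<Longrightarrow> f x = g x) \<Longrightarrow> sm S f \<Longrightarrow> sm S g"
  unfolding sm_def using Ck_cong by blast

lemma sm_minus: "open S \<Longrightarrow> sm S f \<Longrightarrow> sm S (\<lambda>x. - f x)"
  using sm_linear[OF _ bounded_linear_minus[OF bounded_linear_ident]] by auto
lemma sm_diff: "open S \<Longrightarrow> sm S f \<Longrightarrow> sm S g \<Longrightarrow> sm S (\<lambda>x. f x - g x)"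
  using sm_add[of S f "\<lambda>x. - g x"] sm_minus by auto
lemma sm_cnj: "open S \<Longrightarrow> sm S f \<Longrightarrow> sm S (\<lambda>x. cnj (f x))"
  using sm_linear[OF _ bounded_linear_cnj] by auto
lemma sm_divide:
  fixes f g :: "'a::real_normed_vector \<Rightarrow> 'b::real_normed_field"
  shows "open S \<Longrightarrow> sm S f \<Longrightarrow> sm S g \<Longrightarrow> (\<And>x. x \<in> S \<Longrightarrow> g x \<noteq> 0) \<Longrightarrow> sm S (\<lambda>x. f x / g x)"
  using sm_mult[of S f "\<lambda>x. inverse (g x)"] sm_inverse[of S g] by (simp add: divide_inverse)

lemma sm_sum:
  fixes f :: "'i \<Rightarrow> 'a::real_normed_vector \<Rightarrow> 'b::real_normed_vector"
  assumes "open S" "finite A" "\<And>i. i \<in> A \<Longrightarrow> sm S (f i)" shows "sm S (\<lambda>x. \<Sum>i\<in>A. f i x)"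
  using assms(2,3) by (induction A rule: finite_induct) (auto intro!: sm_add simp: assms(1))

lemma sm_prod:
  fixes f :: "'i \<Rightarrow> 'a::real_normed_vector \<Rightarrow> 'b::{real_normed_algebra,comm_ring_1}"
  assumes "open S" "finite A" "\<And>i. i \<in> A \<Longrightarrow> sm S (f i)" shows "sm S (\<lambda>x. \<Prod>i\<in>A. f i x)"
  using assms(2,3) by (induction A rule: finite_induct) (auto intro!: sm_mult simp: assms(1))

lemma Ck_sum:
  fixes f :: "'i \<Rightarrow> 'a::real_normed_vector \<Rightarrow> 'b::real_normed_vector"
  assumes "open S" "finite A" "\<And>i. i \<in> A \<Longrightarrow> Ck k S (f i)" shows "Ck k S (\<lambda>x. \<Sum>i\<in>A. f i x)"
  using assms(2,3) by (induction A rule: finite_induct) (auto intro!: Ck_add Ck_const simp: assms(1))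

lemma pd_basis_expand:
  fixes f :: "'a::euclidean_space \<Rightarrow> 'b::real_normed_vector"
  assumes "f differentiable (at x)"
  shows "pd v f x = (\<Sum>b\<in>Basis. (v \<bullet> b) *\<^sub>R pd b f x)"
proof -
  interpret bounded_linear "\<lambda>v. pd v f x" using pd_has[OF assms] has_derivative_bounded_linear by blast
  have "pd v f x = pd (\<Sum>b\<in>Basis. (v \<bullet> b) *\<^sub>R b) f x" by (simp add: euclidean_representation)
  also have "\<dots> = (\<Sum>b\<in>Basis. (v \<bullet> b) *\<^sub>R pd b f x)" by (simp add: sum scaleR)
  finally show ?thesis .
qed

lemma smooth_on_sm:
  fixes f :: "'a::euclidean_space \<Rightarrow> 'b::real_normed_vector"
  assumes "smooth_on S f" shows "sm S f"
proof -
  have op: "open S" using assms smooth_on_def by auto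
  have "\<forall>vs. set vs \<subseteq> Basis \<longrightarrow> Ck k S (iter_pd vs f)" for k
  proof (induction k)
    case 0 then show ?case using assms unfolding smooth_on_def by auto
  next
    case (Suc k)
    show ?case
    proof (intro allI impI)
      fix vs :: "'a list" assume vs: "set vs \<subseteq> Basis"
      have d: "\<forall>x\<in>S. iter_pd vs f differentiable (at x)"
        using assms vs op unfolding smooth_on_def differentiable_on_def by (metis at_within_open)
      have IH': "Ck k S (iter_pd (b#vs) f)" if "b \<in> Basis" for b
      proof -
        have "set (b#vs) \<subseteq> Basis" using vs that by simp
        then show ?thesis using Suc.IH by blast
      qed
      have "Ck k S (pd v (iter_pd vs f))" for v
      proof (rule Ck_cong[OF op, of "\<lambda>x. \<Sum>b\<in>Basis. (v \<bullet> b) *\<^sub>R iter_pd (b#vs) f x"])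
        show "(\<Sum>b\<in>Basis. (v \<bullet> b) *\<^sub>R iter_pd (b#vs) f x) = pd v (iter_pd vs f) x" if "x \<in> S" for x
          using pd_basis_expand[of "iter_pd vs f" x v] d that by simp
        show "Ck k S (\<lambda>x. \<Sum>b\<in>Basis. (v \<bullet> b) *\<^sub>R iter_pd (b # vs) f x)"
          apply (rule Ck_sum[OF op finite_Basis])
          apply (rule Ck_linear[OF op bounded_linear_scaleR_right])
          using IH' by (simp only: iter_pd.simps)
      qed
      then show "Ck (Suc k) S (iter_pd vs f)" using d by simp
    qed
  qed
  then have "Ck k S (iter_pd [] f)" for k by (metis empty_subsetI empty_set)
  then show ?thesis unfolding sm_def by simp
qed


lemma line_deriv:
  assumes "G differentiable (at (y + t *\<^sub>R v))"
  shows "((\<lambda>s. G (y + s *\<^sub>R v)) has_derivative (\<lambda>r. r *\<^sub>R pd v G (y + t *\<^sub>R v))) (at t)"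
proof -
  have l: "((\<lambda>s. y + s *\<^sub>R v) has_derivative (\<lambda>r. r *\<^sub>R v)) (at t)"
    by (auto intro!: derivative_eq_intros)
  have "((\<lambda>s. G (y + s *\<^sub>R v)) has_derivative (\<lambda>r. pd (r *\<^sub>R v) G (y + t *\<^sub>R v))) (at t)"
    using has_derivative_compose[OF l pd_has[OF assms]] by simp
  then show ?thesis using pd_linear(2)[OF assms] by simp
qed

lemma has_derivative_cont_on:
  assumes "\<And>t. t \<in> T \<Longrightarrow> (f has_derivative f' t) (at t)"
  shows "continuous_on T f"
  using assms by (meson continuous_at_imp_continuous_on has_derivative_continuous)

lemma schwarz_est:
  fixes F :: "'a::real_normed_vector \<Rightarrow> 'b::real_inner"
  assumes S: "open S" "x \<in> S" and F: "sm S F" and e: "e > 0"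
  shows "\<exists>d>0. \<forall>h. 0 < h \<and> h < d \<longrightarrow>
     norm (F (x + h *\<^sub>R u + h *\<^sub>R v) - F (x + h *\<^sub>R u) - F (x + h *\<^sub>R v) + F x
            - (h*h) *\<^sub>R pd v (pd u F) x) \<le> e * h * h"
proof -
  define c where "c = pd v (pd u F) x"
  have cont: "continuous_on S (pd v (pd u F))" by (rule sm_cont[OF sm_pd[OF sm_pd[OF F]]])
  then have "isCont (pd v (pd u F)) x" using continuous_on_eq_continuous_at S by blast
  then obtain d1 where d1: "d1 > 0" "\<And>y. dist y x < d1 \<Longrightarrow> dist (pd v (pd u F) y) c < e"
    unfolding continuous_at_eps_delta c_def using e by blast
  obtain d2 where d2: "d2 > 0" "ball x d2 \<subseteq> S" using S open_contains_ball by blast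
  define d where "d = min d1 d2 / (norm u + norm v + 1)"
  have nuv: "norm u + norm v + 1 > 0" using norm_ge_zero[of u] norm_ge_zero[of v] by linarith
  have dpos: "d > 0" unfolding d_def using d1 d2 nuv by simp
  show ?thesis
  proof (intro exI[of _ d] conjI allI impI dpos)
    fix h assume h: "0 < h \<and> h < d"
    have pt: "x + s *\<^sub>R u + t *\<^sub>R v \<in> S \<and> dist (x + s *\<^sub>R u + t *\<^sub>R v) x < d1"
      if "0 \<le> s" "s \<le> h" "0 \<le> t" "t \<le> h" for s t
    proof -
      have "norm (s *\<^sub>R u + t *\<^sub>R v) \<le> s * norm u + t * norm v"
        using norm_triangle_ineq[of "s *\<^sub>R u" "t *\<^sub>R v"] that by simp
      also have "\<dots> \<le> h * norm u + h * norm v"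
        using that by (intro add_mono mult_right_mono) auto
      also have "\<dots> \<le> h * (norm u + norm v + 1)" using h by (simp add: algebra_simps)
      also have "\<dots> < d * (norm u + norm v + 1)" using h nuv by simp
      also have "\<dots> = min d1 d2" unfolding d_def using nuv by simp
      finally have n: "norm (s *\<^sub>R u + t *\<^sub>R v) < min d1 d2" .
      have "dist (x + s *\<^sub>R u + t *\<^sub>R v) x = norm (s *\<^sub>R u + t *\<^sub>R v)"
        by (simp add: dist_norm algebra_simps)
      then show ?thesis using n d2 by (auto simp: dist_commute)
    qed
    have st1: "norm (pd u F (x + s *\<^sub>R u + h *\<^sub>R v) - pd u F (x + s *\<^sub>R u) - h *\<^sub>R c) \<le> e * h"
      if s: "0 \<le> s" "s \<le> h" for s
    proof -
      define y where "y = x + s *\<^sub>R u"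
      define \<phi> where "\<phi> = (\<lambda>t. pd u F (y + t *\<^sub>R v) - t *\<^sub>R c)"
      have der: "(\<phi> has_derivative (\<lambda>r. r *\<^sub>R (pd v (pd u F) (y + t *\<^sub>R v) - c))) (at t)"
        if "t \<in> {0..h}" for t
      proof -
        have "y + t *\<^sub>R v \<in> S" using pt[of s t] s that unfolding y_def by auto
        then have "pd u F differentiable (at (y + t *\<^sub>R v))" by (rule sm_differentiable[OF sm_pd[OF F]])
        from line_deriv[OF this] have l: "((\<lambda>s. pd u F (y + s *\<^sub>R v)) has_derivative (\<lambda>r. r *\<^sub>R pd v (pd u F) (y + t *\<^sub>R v))) (at t)" .
        have l2: "((\<lambda>t. t *\<^sub>R c) has_derivative (\<lambda>r. r *\<^sub>R c)) (at t)" by (auto intro!: derivative_eq_intros)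
        from has_derivative_diff[OF l l2] show ?thesis unfolding \<phi>_def by (simp add: scaleR_diff_right)
      qed
      have cont: "continuous_on {0..h} \<phi>" by (rule has_derivative_cont_on[OF der])
      have der': "(\<phi> has_derivative (\<lambda>r. r *\<^sub>R (pd v (pd u F) (y + t *\<^sub>R v) - c))) (at t)"
        if "0 < t" "t < h" for t using der that by simp
      have "\<exists>t\<in>{0<..<h}. norm (\<phi> h - \<phi> 0) \<le> norm ((h - 0) *\<^sub>R (pd v (pd u F) (y + t *\<^sub>R v) - c))"
        by (rule mvt_general[OF _ cont der']) (use h in simp)
      then obtain t where t: "0 < t" "t < h"
        "norm (\<phi> h - \<phi> 0) \<le> norm (h *\<^sub>R (pd v (pd u F) (y + t *\<^sub>R v) - c))"
        by auto
      have "y + t *\<^sub>R v \<in> S \<and> dist (y + t *\<^sub>R v) x < d1"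
        unfolding y_def by (rule pt) (use s t in auto)
      then have "dist (pd v (pd u F) (y + t *\<^sub>R v)) c < e"
        using d1(2) by blast
      then have "norm (h *\<^sub>R (pd v (pd u F) (y + t *\<^sub>R v) - c)) \<le> h * e"
        using h by (simp add: dist_norm)
      moreover have "\<phi> h - \<phi> 0 = pd u F (x + s *\<^sub>R u + h *\<^sub>R v) - pd u F (x + s *\<^sub>R u) - h *\<^sub>R c"
        unfolding \<phi>_def y_def by simp
      ultimately show ?thesis using t(3) by (simp add: mult.commute)
    qed
    define \<psi> where "\<psi> = (\<lambda>s. F ((x + h *\<^sub>R v) + s *\<^sub>R u) - F (x + s *\<^sub>R u) - (s * h) *\<^sub>R c)"
    have der: "(\<psi> has_derivative (\<lambda>r. r *\<^sub>R (pd u F (x + s *\<^sub>R u + h *\<^sub>R v) - pd u F (x + s *\<^sub>R u) - h *\<^sub>R c))) (at s)"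
      if "s \<in> {0..h}" for s
    proof -
      have "x + s *\<^sub>R u + h *\<^sub>R v \<in> S" "x + s *\<^sub>R u + 0 *\<^sub>R v \<in> S" using pt[of s h] pt[of s 0] h that by auto
      then have a: "F differentiable (at ((x + h *\<^sub>R v) + s *\<^sub>R u))" "F differentiable (at (x + s *\<^sub>R u))"
        using sm_differentiable F by (auto simp: algebra_simps)
      have e1: "(x + h *\<^sub>R v) + s *\<^sub>R u = x + s *\<^sub>R u + h *\<^sub>R v" by (simp add: algebra_simps)
      have d1': "((\<lambda>s. F ((x + h *\<^sub>R v) + s *\<^sub>R u)) has_derivative (\<lambda>r. r *\<^sub>R pd u F (x + s *\<^sub>R u + h *\<^sub>R v))) (at s)"
        using line_deriv[OF a(1)] unfolding e1 .
      have d2': "((\<lambda>s. F (x + s *\<^sub>R u)) has_derivative (\<lambda>r. r *\<^sub>R pd u F (x + s *\<^sub>R u))) (at s)"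
        using line_deriv[OF a(2)] .
      have d3: "((\<lambda>s. (s*h) *\<^sub>R c) has_derivative (\<lambda>r. (r*h) *\<^sub>R c)) (at s)"
        by (auto intro!: derivative_eq_intros)
      have "((\<lambda>s. F ((x + h *\<^sub>R v) + s *\<^sub>R u) - F (x + s *\<^sub>R u) - (s*h) *\<^sub>R c) has_derivative
         (\<lambda>r. r *\<^sub>R pd u F (x + s *\<^sub>R u + h *\<^sub>R v) - r *\<^sub>R pd u F (x + s *\<^sub>R u) - (r*h) *\<^sub>R c)) (at s)"
        by (intro has_derivative_diff d1' d2' d3)
      then show ?thesis unfolding \<psi>_def by (simp add: algebra_simps)
    qed
    have cont: "continuous_on {0..h} \<psi>" by (rule has_derivative_cont_on[OF der])
    have der': "(\<psi> has_derivative (\<lambda>r. r *\<^sub>R (pd u F (x + s *\<^sub>R u + h *\<^sub>R v) - pd u F (x + s *\<^sub>R u) - h *\<^sub>R c))) (at s)"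
      if "0 < s" "s < h" for s using der that by simp
    have "\<exists>s\<in>{0<..<h}. norm (\<psi> h - \<psi> 0) \<le> norm ((h - 0) *\<^sub>R (pd u F (x + s *\<^sub>R u + h *\<^sub>R v) - pd u F (x + s *\<^sub>R u) - h *\<^sub>R c))"
      by (rule mvt_general[OF _ cont der']) (use h in simp)
    then obtain s where s: "0 < s" "s < h"
      "norm (\<psi> h - \<psi> 0) \<le> norm (h *\<^sub>R (pd u F (x + s *\<^sub>R u + h *\<^sub>R v) - pd u F (x + s *\<^sub>R u) - h *\<^sub>R c))"
      by auto
    have eqh: "h * (e * h) = e * h * h" by (simp add: algebra_simps)
    have n1: "norm (pd u F (x + s *\<^sub>R u + h *\<^sub>R v) - pd u F (x + s *\<^sub>R u) - h *\<^sub>R c) \<le> e * h"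
      by (rule st1) (use s in auto)
    have "norm (h *\<^sub>R (pd u F (x + s *\<^sub>R u + h *\<^sub>R v) - pd u F (x + s *\<^sub>R u) - h *\<^sub>R c)) \<le> h * (e * h)"
      using mult_left_mono[OF n1, of h] h by simp
    moreover have "\<psi> h - \<psi> 0 = F (x + h *\<^sub>R u + h *\<^sub>R v) - F (x + h *\<^sub>R u) - F (x + h *\<^sub>R v) + F x
            - (h*h) *\<^sub>R pd v (pd u F) x"
      unfolding \<psi>_def c_def by (simp add: algebra_simps)
    ultimately show "norm (F (x + h *\<^sub>R u + h *\<^sub>R v) - F (x + h *\<^sub>R u) - F (x + h *\<^sub>R v) + F x
            - (h*h) *\<^sub>R pd v (pd u F) x) \<le> e * h * h" (is ?g)
      using s(3) eqh by (metis order_trans)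
  qed
qed

lemma schwarz:
  fixes F :: "'a::real_normed_vector \<Rightarrow> 'b::real_inner"
  assumes "open S" "x \<in> S" "sm S F"
  shows "pd u (pd v F) x = pd v (pd u F) x"
proof -
  have *: "norm (pd v (pd u F) x - pd u (pd v F) x) \<le> 2 * e" if e: "e > 0" for e
  proof -
    obtain d1 where d1: "d1 > 0" "\<And>h. 0 < h \<and> h < d1 \<Longrightarrow>
     norm (F (x + h *\<^sub>R u + h *\<^sub>R v) - F (x + h *\<^sub>R u) - F (x + h *\<^sub>R v) + F x
            - (h*h) *\<^sub>R pd v (pd u F) x) \<le> e * h * h"
      using schwarz_est[OF assms e, of u v] by blast
    obtain d2 where d2: "d2 > 0" "\<And>h. 0 < h \<and> h < d2 \<Longrightarrow>
     norm (F (x + h *\<^sub>R v + h *\<^sub>R u) - F (x + h *\<^sub>R v) - F (x + h *\<^sub>R u) + F x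
            - (h*h) *\<^sub>R pd u (pd v F) x) \<le> e * h * h"
      using schwarz_est[OF assms e, of v u] by blast
    define h where "h = min d1 d2 / 2"
    have h: "0 < h" "h < d1" "h < d2" unfolding h_def using d1 d2 by auto
    define \<Delta> where "\<Delta> = F (x + h *\<^sub>R u + h *\<^sub>R v) - F (x + h *\<^sub>R u) - F (x + h *\<^sub>R v) + F x"
    have "x + h *\<^sub>R v + h *\<^sub>R u = x + h *\<^sub>R u + h *\<^sub>R v" by (simp add: algebra_simps)
    then have deq: "F (x + h *\<^sub>R v + h *\<^sub>R u) - F (x + h *\<^sub>R v) - F (x + h *\<^sub>R u) + F x = \<Delta>"
      unfolding \<Delta>_def by (simp add: algebra_simps)
    have a1: "norm (\<Delta> - (h*h) *\<^sub>R pd v (pd u F) x) \<le> e * h * h"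
      unfolding \<Delta>_def by (rule d1(2)) (use h in simp)
    have "norm (F (x + h *\<^sub>R v + h *\<^sub>R u) - F (x + h *\<^sub>R v) - F (x + h *\<^sub>R u) + F x
            - (h*h) *\<^sub>R pd u (pd v F) x) \<le> e * h * h"
      by (rule d2(2)) (use h in simp)
    then have a2: "norm (\<Delta> - (h*h) *\<^sub>R pd u (pd v F) x) \<le> e * h * h"
      unfolding deq .
    note a = a1 a2
    have "norm ((h*h) *\<^sub>R (pd v (pd u F) x - pd u (pd v F) x))
        = norm ((\<Delta> - (h*h) *\<^sub>R pd u (pd v F) x) - (\<Delta> - (h*h) *\<^sub>R pd v (pd u F) x))"
      by (simp add: algebra_simps)
    also have "\<dots> \<le> norm (\<Delta> - (h*h) *\<^sub>R pd u (pd v F) x) + norm (\<Delta> - (h*h) *\<^sub>R pd v (pd u F) x)"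
      by (rule norm_triangle_ineq4)
    also have "\<dots> \<le> e * h * h + e * h * h"
      by (rule add_mono[OF a2 a1])
    finally have f1: "norm ((h*h) *\<^sub>R (pd v (pd u F) x - pd u (pd v F) x)) \<le> e * h * h + e * h * h" .
    have f2: "e * h * h + e * h * h = (h*h) * (2*e)" by (simp add: algebra_simps)
    have f3: "norm ((h*h) *\<^sub>R (pd v (pd u F) x - pd u (pd v F) x)) = (h*h) * norm (pd v (pd u F) x - pd u (pd v F) x)"
      by simp
    have "(h*h) * norm (pd v (pd u F) x - pd u (pd v F) x) \<le> (h * h) * (2 * e)"
      using f1 unfolding f2 f3 .
    then show ?thesis using h by (simp add: mult_le_cancel_left)
  qed
  show ?thesis
  proof (rule ccontr)
    assume "pd u (pd v F) x \<noteq> pd v (pd u F) x"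
    then have p: "norm (pd v (pd u F) x - pd u (pd v F) x) > 0" by simp
    from *[of "norm (pd v (pd u F) x - pd u (pd v F) x) / 4"] p show False by simp
  qed
qed

definition lop :: "'a::real_normed_vector \<Rightarrow> 'a \<Rightarrow> complex \<Rightarrow> ('a \<Rightarrow> complex) \<Rightarrow> 'a \<Rightarrow> complex" where
  "lop e1 e2 c F p = (pd e1 F p + c * pd e2 F p) / 2"

lemma dZ_lop: "dZ = lop (1,0) (\<i>,0) (-\<i>)" by (auto simp: fun_eq_iff dZ_def lop_def)
lemma dZb_lop: "dZb = lop (1,0) (\<i>,0) \<i>" by (auto simp: fun_eq_iff dZb_def lop_def)
lemma dW_lop: "dW a = lop (0, axis a 1) (0, axis a \<i>) (-\<i>)" by (auto simp: fun_eq_iff dW_def lop_def)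
lemma dWb_lop: "dWb a = lop (0, axis a 1) (0, axis a \<i>) \<i>" by (auto simp: fun_eq_iff dWb_def lop_def)

lemma pd_add: "F differentiable (at p) \<Longrightarrow> G differentiable (at p) \<Longrightarrow>
  pd v (\<lambda>q. F q + G q) p = pd v F p + pd v G p"
  by (rule pd_eq) (auto intro!: has_derivative_add pd_has)
lemma pd_diff: "F differentiable (at p) \<Longrightarrow> G differentiable (at p) \<Longrightarrow>
  pd v (\<lambda>q. F q - G q) p = pd v F p - pd v G p"
  by (rule pd_eq) (auto intro!: has_derivative_diff pd_has)
lemma pd_minus: "F differentiable (at p) \<Longrightarrow> pd v (\<lambda>q. - F q) p = - pd v F p"
  by (rule pd_eq) (auto intro!: has_derivative_minus pd_has)
lemma pd_const: "pd v (\<lambda>q. c) p = 0"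
  by (rule pd_eq) (auto intro!: has_derivative_const)
lemma pd_mult:
  fixes F G :: "'a::real_normed_vector \<Rightarrow> 'b::real_normed_algebra"
  shows "F differentiable (at p) \<Longrightarrow> G differentiable (at p) \<Longrightarrow>
  pd v (\<lambda>q. F q * G q) p = F p * pd v G p + pd v F p * G p"
  by (rule pd_eq) (auto intro!: has_derivative_mult pd_has)
lemma pd_cnj: "F differentiable (at p) \<Longrightarrow> pd v (\<lambda>q. cnj (F q)) p = cnj (pd v F p)"
  by (rule pd_eq) (auto intro!: bounded_linear.has_derivative[OF bounded_linear_cnj] pd_has)
lemma pd_sum:
  fixes F :: "'i \<Rightarrow> 'a::real_normed_vector \<Rightarrow> 'b::real_normed_vector"
  shows "finite A \<Longrightarrow> (\<And>i. i \<in> A \<Longrightarrow> F i differentiable (at p)) \<Longrightarrow>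
  pd v (\<lambda>q. \<Sum>i\<in>A. F i q) p = (\<Sum>i\<in>A. pd v (F i) p)"
  by (rule pd_eq) (auto intro!: has_derivative_sum pd_has)
lemma pd_lin2:
  fixes P Q :: "'a::real_normed_vector \<Rightarrow> complex"
  shows "P differentiable (at p) \<Longrightarrow> Q differentiable (at p) \<Longrightarrow>
  pd v (\<lambda>q. (P q + d * Q q) / 2) p = (pd v P p + d * pd v Q p) / 2"
  by (rule pd_eq) (auto intro!: derivative_eq_intros pd_has)

lemma lop_add: "F differentiable (at p) \<Longrightarrow> G differentiable (at p) \<Longrightarrow>
  lop e1 e2 c (\<lambda>q. F q + G q) p = lop e1 e2 c F p + lop e1 e2 c G p"
  by (simp add: lop_def pd_add algebra_simps add_divide_distrib)
lemma lop_diff: "F differentiable (at p) \<Longrightarrow> G differentiable (at p) \<Longrightarrow>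
  lop e1 e2 c (\<lambda>q. F q - G q) p = lop e1 e2 c F p - lop e1 e2 c G p"
  by (simp add: lop_def pd_diff algebra_simps diff_divide_distrib)
lemma lop_minus: "F differentiable (at p) \<Longrightarrow>
  lop e1 e2 c (\<lambda>q. - F q) p = - lop e1 e2 c F p"
  by (simp add: lop_def pd_minus algebra_simps)
lemma lop_const: "lop e1 e2 c (\<lambda>q. k) p = 0"
  by (simp add: lop_def pd_const)
lemma lop_mult: "F differentiable (at p) \<Longrightarrow> G differentiable (at p) \<Longrightarrow>
  lop e1 e2 c (\<lambda>q. F q * G q) p = lop e1 e2 c F p * G p + F p * lop e1 e2 c G p"
  by (simp add: lop_def pd_mult algebra_simps add_divide_distrib)
lemma lop_sum: "finite A \<Longrightarrow> (\<And>i. i \<in> A \<Longrightarrow> F i differentiable (at p)) \<Longrightarrow>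
  lop e1 e2 c (\<lambda>q. \<Sum>i\<in>A. F i q) p = (\<Sum>i\<in>A. lop e1 e2 c (F i) p)"
  unfolding lop_def by (simp add: pd_sum sum_distrib_left sum.distrib flip: sum_divide_distrib)
lemma lop_cnj: "F differentiable (at p) \<Longrightarrow>
  cnj (lop e1 e2 c F p) = lop e1 e2 (cnj c) (\<lambda>q. cnj (F q)) p"
  by (simp add: lop_def pd_cnj)
lemma lop_cong:
  assumes "open S" "p \<in> S" "\<And>q. q \<in> S \<Longrightarrow> F q = G q"
  shows "lop e1 e2 c F p = lop e1 e2 c G p"
proof -
  have "pd v F p = pd v G p" for v by (rule pd_cong[OF assms])
  then show ?thesis unfolding lop_def by simp
qed
lemma sm_lop:
  assumes S: "open S" and F: "sm S F" shows "sm S (lop e1 e2 c F)"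
proof -
  have 1: "sm S (pd e1 F)" "sm S (pd e2 F)" by (rule sm_pd[OF F])+
  have "sm S (\<lambda>p. c * pd e2 F p)" by (rule sm_mult[OF S sm_const[OF S] 1(2)])
  then have "sm S (\<lambda>p. pd e1 F p + c * pd e2 F p)" by (rule sm_add[OF S 1(1)])
  then have "sm S (\<lambda>p. (pd e1 F p + c * pd e2 F p) / 2)" by (rule sm_divide[OF S _ sm_const[OF S]]) simp
  then show ?thesis unfolding lop_def .
qed

lemma lop_comm:
  assumes S: "open S" "p \<in> S" and F: "sm S F"
  shows "lop a1 a2 c (lop b1 b2 d F) p = lop b1 b2 d (lop a1 a2 c F) p"
proof -
  have D: "pd e F differentiable (at p)" for e using sm_differentiable[OF sm_pd[OF F] S(2)] .
  have sw: "pd u (pd v F) p = pd v (pd u F) p" for u v by (rule schwarz[OF S F])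
  have lb: "lop b1 b2 d F = (\<lambda>q. (pd b1 F q + d * pd b2 F q)/2)" by (rule ext) (simp add: lop_def)
  have la: "lop a1 a2 c F = (\<lambda>q. (pd a1 F q + c * pd a2 F q)/2)" by (rule ext) (simp add: lop_def)
  have L: "lop a1 a2 c (lop b1 b2 d F) p = ((pd a1 (pd b1 F) p + d * pd a1 (pd b2 F) p)/2
       + c * ((pd a2 (pd b1 F) p + d * pd a2 (pd b2 F) p)/2))/2"
    unfolding lop_def[of a1 a2 c] lb pd_lin2[OF D D] ..
  have R: "lop b1 b2 d (lop a1 a2 c F) p = ((pd b1 (pd a1 F) p + c * pd b1 (pd a2 F) p)/2
       + d * ((pd b2 (pd a1 F) p + c * pd b2 (pd a2 F) p)/2))/2"
    unfolding lop_def[of b1 b2 d] la pd_lin2[OF D D] ..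
  show ?thesis unfolding L R sw[of a1 b1] sw[of a1 b2] sw[of a2 b1] sw[of a2 b2]
    by (simp add: field_simps)
qed

lemma re_im_decomp:
  "of_real (Re x) * P + of_real (Im x) * Q = x * ((P - \<i> * Q)/2) + cnj x * ((P + \<i> * Q)/2)"
  by (cases x) (simp add: Complex_eq field_simps)

lemma axis_sum_eq: "(\<Sum>a\<in>UNIV. axis a (y$a)) = (y::complex^'n)"
proof -
  have "axis a (y$a) = (y$a) *s axis a 1" for a by (simp add: vec_eq_iff axis_def)
  then show ?thesis using basis_expansion[of y] by simp
qed

lemma lin_decomp_pd:
  fixes h :: "complex \<times> (complex^'n) \<Rightarrow> complex"
  assumes hd: "h differentiable (at p)"
  shows "pd (x, y) h p = x * dZ h p + cnj x * dZb h p
     + (\<Sum>a\<in>UNIV. y$a * dW a h p + cnj (y$a) * dWb a h p)"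
proof -
  define L where "L = (\<lambda>v. pd v h p)"
  have "bounded_linear L" unfolding L_def using pd_has[OF hd] has_derivative_bounded_linear by blast
  then interpret L: bounded_linear L .
  have c1: "L (c, 0) = c * dZ h p + cnj c * dZb h p" for c
  proof -
    have "(c, 0::complex^'n) = Re c *\<^sub>R (1,0) + Im c *\<^sub>R (\<i>, 0)"
      by (simp add: complex_eq_iff)
    then have "L (c, 0) = L (Re c *\<^sub>R (1,0) + Im c *\<^sub>R (\<i>, 0))" by (rule arg_cong)
    also have "\<dots> = of_real (Re c) * L (1,0) + of_real (Im c) * L (\<i>, 0)"
      by (simp only: L.add L.scaleR) (simp add: scaleR_conv_of_real)
    finally have "L (c, 0) = of_real (Re c) * L (1,0) + of_real (Im c) * L (\<i>, 0)" .
    then show ?thesis unfolding re_im_decomp dZ_def dZb_def L_def by (simp add: algebra_simps)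
  qed
  have c2: "L (0, axis a c) = c * dW a h p + cnj c * dWb a h p" for a c
  proof -
    have "(0::complex, axis a c) = Re c *\<^sub>R (0, axis a 1) + Im c *\<^sub>R (0, axis a \<i>)"
      by (simp add: vec_eq_iff axis_def complex_eq_iff)
    then have "L (0, axis a c) = L (Re c *\<^sub>R (0, axis a 1) + Im c *\<^sub>R (0, axis a \<i>))" by (rule arg_cong)
    also have "\<dots> = of_real (Re c) * L (0, axis a 1) + of_real (Im c) * L (0, axis a \<i>)"
      by (simp only: L.add L.scaleR) (simp add: scaleR_conv_of_real)
    finally have "L (0, axis a c) = of_real (Re c) * L (0, axis a 1) + of_real (Im c) * L (0, axis a \<i>)" .
    then show ?thesis unfolding re_im_decomp dW_def dWb_def L_def by (simp add: algebra_simps)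
  qed
  have "(x, y) = (x, 0) + (\<Sum>a\<in>UNIV. (0, axis a (y$a)))"
    by (simp add: prod_eq_iff fst_sum snd_sum axis_sum_eq)
  then have "L (x, y) = L (x, 0) + (\<Sum>a\<in>UNIV. L (0, axis a (y$a)))"
    by (simp add: L.add L.sum)
  also have "\<dots> = x * dZ h p + cnj x * dZb h p
     + (\<Sum>a\<in>UNIV. y$a * dW a h p + cnj (y$a) * dWb a h p)" unfolding c1 c2 ..
  finally show ?thesis unfolding L_def .
qed

lemma vec_deriv:
  fixes f :: "complex \<Rightarrow> complex^'n"
  assumes "\<forall>a. ((\<lambda>s. f s $ a) has_field_derivative d $ a) (at t)"
  shows "(f has_derivative (\<lambda>r. r *s d)) (at t)"
proof -
  have "((\<lambda>x. f x \<bullet> i) has_derivative (\<lambda>x. (x *s d) \<bullet> i)) (at t)" if "i \<in> Basis" for i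
  proof -
  from that obtain j u where i: "i = axis j u" "u \<in> Basis" unfolding Basis_vec_def by blast
  have "((\<lambda>s. f s $ j) has_derivative (\<lambda>r. d $ j * r)) (at t)"
    using assms has_field_derivative_imp_has_derivative by blast
  from bounded_linear.has_derivative[OF bounded_linear_inner_left this, of u]
  have "((\<lambda>s. (f s $ j) \<bullet> u) has_derivative (\<lambda>r. (d $ j * r) \<bullet> u)) (at t)" .
  then show "((\<lambda>x. f x \<bullet> i) has_derivative (\<lambda>x. (x *s d) \<bullet> i)) (at t)"
    unfolding i by (simp add: inner_axis mult.commute)
  qed
  then show ?thesis using has_derivative_componentwise_within[of f "\<lambda>r. r *s d" t UNIV] by blast
qed

lemma sum_comb:
  fixes F G :: "'x \<Rightarrow> 'b::comm_ring_1"
  shows "(\<Sum>a\<in>A. F a) - c * (\<Sum>a\<in>A. G a) = (\<Sum>a\<in>A. F a - c * G a)"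
  "(\<Sum>a\<in>A. F a) + c * (\<Sum>a\<in>A. G a) = (\<Sum>a\<in>A. F a + c * G a)"
  by (simp_all add: sum_distrib_left sum_subtractf[symmetric] sum.distrib[symmetric])

lemma ii: "\<i> * (\<i> * x) = - x"
  by (simp add: mult.assoc[symmetric])

lemma leaf_chain:
  fixes h :: "complex \<times> (complex^'n) \<Rightarrow> complex" and f :: "complex \<Rightarrow> complex^'n"
  assumes hd: "h differentiable (at (t, f t))"
    and fd: "\<forall>a. ((\<lambda>s. f s $ a) has_field_derivative d $ a) (at t)"
  shows "wz (\<lambda>s. h (s, f s)) t = dZ h (t, f t) + (\<Sum>a\<in>UNIV. d$a * dW a h (t, f t))"
    and "wzb (\<lambda>s. h (s, f s)) t = dZb h (t, f t) + (\<Sum>a\<in>UNIV. cnj (d$a) * dWb a h (t, f t))"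
proof -
  have pair: "((\<lambda>s. (s, f s)) has_derivative (\<lambda>r. (r, r *s d))) (at t)"
    by (rule has_derivative_Pair[OF has_derivative_ident vec_deriv[OF fd]])
  have comp: "((\<lambda>s. h (s, f s)) has_derivative (\<lambda>r. pd (r, r *s d) h (t, f t))) (at t)"
    using has_derivative_compose[OF pair pd_has[OF hd]] by simp
  have p1: "pd 1 (\<lambda>s. h (s, f s)) t = pd (1, d) h (t, f t)" using pd_eq[OF comp] by simp
  have p2: "pd \<i> (\<lambda>s. h (s, f s)) t = pd (\<i>, \<i> *s d) h (t, f t)" using pd_eq[OF comp] by simp
  define Z where "Z = dZ h (t, f t)"
  define Zb where "Zb = dZb h (t, f t)"
  define W where "W a = dW a h (t, f t)" for a
  define Wb where "Wb a = dWb a h (t, f t)" for a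
  have e1: "pd (1, d) h (t, f t) = Z + Zb + (\<Sum>a\<in>UNIV. d$a * W a + cnj (d$a) * Wb a)"
    unfolding lin_decomp_pd[OF hd] Z_def Zb_def W_def Wb_def by simp
  have e2: "pd (\<i>, \<i> *s d) h (t, f t) = \<i> * Z - \<i> * Zb + (\<Sum>a\<in>UNIV. \<i> * (d$a * W a) - \<i> * (cnj (d$a) * Wb a))"
    unfolding lin_decomp_pd[OF hd] Z_def Zb_def W_def Wb_def by (simp add: algebra_simps)
  have s1: "(\<Sum>a\<in>UNIV. d$a * W a + cnj (d$a) * Wb a) - \<i> * (\<Sum>a\<in>UNIV. \<i> * (d$a * W a) - \<i> * (cnj (d$a) * Wb a))
      = 2 * (\<Sum>a\<in>UNIV. d$a * W a)"
  proof -
    have "(\<Sum>a\<in>UNIV. d$a * W a + cnj (d$a) * Wb a) - \<i> * (\<Sum>a\<in>UNIV. \<i> * (d$a * W a) - \<i> * (cnj (d$a) * Wb a))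
       = (\<Sum>a\<in>UNIV. (d$a * W a + cnj (d$a) * Wb a) - \<i> * (\<i> * (d$a * W a) - \<i> * (cnj (d$a) * Wb a)))"
      by (rule sum_comb)
    also have "\<dots> = (\<Sum>a\<in>UNIV. 2 * (d$a * W a))"
      by (rule sum.cong) (simp_all add: algebra_simps ii)
    also have "\<dots> = 2 * (\<Sum>a\<in>UNIV. d$a * W a)" by (simp add: sum_distrib_left)
    finally show ?thesis .
  qed
  have s2: "(\<Sum>a\<in>UNIV. d$a * W a + cnj (d$a) * Wb a) + \<i> * (\<Sum>a\<in>UNIV. \<i> * (d$a * W a) - \<i> * (cnj (d$a) * Wb a))
      = 2 * (\<Sum>a\<in>UNIV. cnj (d$a) * Wb a)"
  proof -
    have "(\<Sum>a\<in>UNIV. d$a * W a + cnj (d$a) * Wb a) + \<i> * (\<Sum>a\<in>UNIV. \<i> * (d$a * W a) - \<i> * (cnj (d$a) * Wb a))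
       = (\<Sum>a\<in>UNIV. (d$a * W a + cnj (d$a) * Wb a) + \<i> * (\<i> * (d$a * W a) - \<i> * (cnj (d$a) * Wb a)))"
      by (rule sum_comb)
    also have "\<dots> = (\<Sum>a\<in>UNIV. 2 * (cnj (d$a) * Wb a))"
      by (rule sum.cong) (simp_all add: algebra_simps ii)
    also have "\<dots> = 2 * (\<Sum>a\<in>UNIV. cnj (d$a) * Wb a)" by (simp add: sum_distrib_left)
    finally show ?thesis .
  qed
  show "wz (\<lambda>s. h (s, f s)) t = dZ h (t, f t) + (\<Sum>a\<in>UNIV. d$a * dW a h (t, f t))"
  proof -
    have "wz (\<lambda>s. h (s, f s)) t = (Z + Zb + (\<Sum>a\<in>UNIV. d$a * W a + cnj (d$a) * Wb a)
        - \<i> * (\<i> * Z - \<i> * Zb + (\<Sum>a\<in>UNIV. \<i> * (d$a * W a) - \<i> * (cnj (d$a) * Wb a)))) / 2"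
      unfolding wz_def p1 p2 e1 e2 ..
    also have "\<dots> = (2 * Z + ((\<Sum>a\<in>UNIV. d$a * W a + cnj (d$a) * Wb a)
        - \<i> * (\<Sum>a\<in>UNIV. \<i> * (d$a * W a) - \<i> * (cnj (d$a) * Wb a)))) / 2"
      by (simp add: algebra_simps)
    also have "\<dots> = Z + (\<Sum>a\<in>UNIV. d$a * W a)" unfolding s1 by simp
    finally show ?thesis unfolding Z_def W_def .
  qed
  show "wzb (\<lambda>s. h (s, f s)) t = dZb h (t, f t) + (\<Sum>a\<in>UNIV. cnj (d$a) * dWb a h (t, f t))"
  proof -
    have "wzb (\<lambda>s. h (s, f s)) t = (Z + Zb + (\<Sum>a\<in>UNIV. d$a * W a + cnj (d$a) * Wb a)
        + \<i> * (\<i> * Z - \<i> * Zb + (\<Sum>a\<in>UNIV. \<i> * (d$a * W a) - \<i> * (cnj (d$a) * Wb a)))) / 2"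
      unfolding wzb_def p1 p2 e1 e2 ..
    also have "\<dots> = (2 * Zb + ((\<Sum>a\<in>UNIV. d$a * W a + cnj (d$a) * Wb a)
        + \<i> * (\<Sum>a\<in>UNIV. \<i> * (d$a * W a) - \<i> * (cnj (d$a) * Wb a)))) / 2"
      by (simp add: algebra_simps)
    also have "\<dots> = Zb + (\<Sum>a\<in>UNIV. cnj (d$a) * Wb a)" unfolding s2 by simp
    finally show ?thesis unfolding Zb_def Wb_def .
  qed
qed

lemma pd_snd:
  assumes "h differentiable (at (snd p))"
  shows "pd v (\<lambda>q. h (snd q)) p = pd (snd v) h (snd p)"
proof -
  have "((\<lambda>q. h (snd q)) has_derivative (\<lambda>v. pd (snd v) h (snd p))) (at p)"
    using has_derivative_compose[OF has_derivative_snd[OF has_derivative_ident] pd_has[OF assms]] by simp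
  then show ?thesis by (rule pd_eq)
qed

lemma Ck_snd:
  assumes S: "open S" and U: "open U" and SU: "\<And>p. p \<in> S \<Longrightarrow> snd p \<in> U" and h: "Ck k U h"
  shows "Ck k S (\<lambda>p. h (snd p))"
  using h
proof (induction k arbitrary: h)
  case 0
  then show ?case using SU by (auto intro!: continuous_on_compose2[of U _ S snd] continuous_on_snd continuous_on_id)
next
  case (Suc k)
  have hd: "h differentiable (at (snd p))" if "p \<in> S" for p using Suc.prems SU[OF that] by simp
  have "Ck k S (pd v (\<lambda>p. h (snd p)))" for v
    apply (rule Ck_cong[OF S, of "\<lambda>p. pd (snd v) h (snd p)"])
    using pd_snd[OF hd] apply simp
    using Suc by simp
  moreover have "(\<lambda>q. h (snd q)) differentiable (at p)" if "p \<in> S" for p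
    using has_derivative_compose[OF has_derivative_snd[OF has_derivative_ident] pd_has[OF hd[OF that]]]
    unfolding differentiable_def by blast
  ultimately show ?case by simp
qed

lemma sm_snd: "open S \<Longrightarrow> open U \<Longrightarrow> (\<And>p. p \<in> S \<Longrightarrow> snd p \<in> U) \<Longrightarrow> sm U h \<Longrightarrow> sm S (\<lambda>p. h (snd p))"
  unfolding sm_def using Ck_snd by blast

lemma pd_zero: "h differentiable (at p) \<Longrightarrow> pd 0 h p = 0"
  using pd_linear(2)[of h p 0 0] by simp

lemma dZ_snd: "h differentiable (at (snd p)) \<Longrightarrow> dZ (\<lambda>q. h (snd q)) p = 0"
  by (simp add: dZ_def pd_snd pd_zero)
lemma dZb_snd: "h differentiable (at (snd p)) \<Longrightarrow> dZb (\<lambda>q. h (snd q)) p = 0"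
  by (simp add: dZb_def pd_snd pd_zero)
lemma dW_snd: "h differentiable (at (snd p)) \<Longrightarrow> dW a (\<lambda>q. h (snd q)) p = dWv a h (snd p)"
  by (simp add: dW_def dWv_def pd_snd)

definition isop :: "((complex \<times> (complex^'n::finite) \<Rightarrow> complex) \<Rightarrow> complex \<times> (complex^'n) \<Rightarrow> complex) \<Rightarrow> bool" where
  "isop D \<longleftrightarrow> (\<exists>e1 e2 c. D = lop e1 e2 c)"

lemma isop_dZ: "isop dZ" unfolding isop_def dZ_lop by blast
lemma isop_dZb: "isop dZb" unfolding isop_def dZb_lop by blast
lemma isop_dW: "isop (dW a)" unfolding isop_def dW_lop by blast
lemma isop_dWb: "isop (dWb a)" unfolding isop_def dWb_lop by blast

lemma isop_sm: "isop D \<Longrightarrow> open S \<Longrightarrow> sm S F \<Longrightarrow> sm S (D F)"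
  unfolding isop_def using sm_lop by blast
lemma isop_comm: "isop D1 \<Longrightarrow> isop D2 \<Longrightarrow> open S \<Longrightarrow> p \<in> S \<Longrightarrow> sm S F \<Longrightarrow> D1 (D2 F) p = D2 (D1 F) p"
  unfolding isop_def using lop_comm by blast
lemma isop_mult: "isop D \<Longrightarrow> F differentiable (at p) \<Longrightarrow> G differentiable (at p) \<Longrightarrow>
   D (\<lambda>q. F q * G q) p = D F p * G p + F p * D G p"
  unfolding isop_def using lop_mult by blast
lemma isop_add: "isop D \<Longrightarrow> F differentiable (at p) \<Longrightarrow> G differentiable (at p) \<Longrightarrow>
   D (\<lambda>q. F q + G q) p = D F p + D G p"
  unfolding isop_def using lop_add by blast
lemma isop_diff: "isop D \<Longrightarrow> F differentiable (at p) \<Longrightarrow> G differentiable (at p) \<Longrightarrow>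
   D (\<lambda>q. F q - G q) p = D F p - D G p"
  unfolding isop_def using lop_diff by blast
lemma isop_minus: "isop D \<Longrightarrow> F differentiable (at p) \<Longrightarrow> D (\<lambda>q. - F q) p = - D F p"
  unfolding isop_def using lop_minus by blast
lemma isop_const: "isop D \<Longrightarrow> D (\<lambda>q. k) p = 0"
  unfolding isop_def using lop_const by blast
lemma isop_sum: "isop D \<Longrightarrow> finite A \<Longrightarrow> (\<And>i. i \<in> A \<Longrightarrow> F i differentiable (at p)) \<Longrightarrow>
   D (\<lambda>q. \<Sum>i\<in>A. F i q) p = (\<Sum>i\<in>A. D (F i) p)"
  unfolding isop_def using lop_sum by blast
lemma isop_cong: "isop D \<Longrightarrow> open S \<Longrightarrow> p \<in> S \<Longrightarrow> (\<And>q. q \<in> S \<Longrightarrow> F q = G q) \<Longrightarrow> D F p = D G p"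
  unfolding isop_def using lop_cong by blast

lemma cnj_dW: "F differentiable (at p) \<Longrightarrow> cnj (dW a F p) = dWb a (\<lambda>q. cnj (F q)) p"
  unfolding dW_lop dWb_lop by (simp add: lop_cnj)
lemma cnj_dWb: "F differentiable (at p) \<Longrightarrow> cnj (dWb a F p) = dW a (\<lambda>q. cnj (F q)) p"
  unfolding dW_lop dWb_lop by (simp add: lop_cnj)
lemma cnj_dZ: "F differentiable (at p) \<Longrightarrow> cnj (dZ F p) = dZb (\<lambda>q. cnj (F q)) p"
  unfolding dZ_lop dZb_lop by (simp add: lop_cnj)
lemma cnj_dZb: "F differentiable (at p) \<Longrightarrow> cnj (dZb F p) = dZ (\<lambda>q. cnj (F q)) p"
  unfolding dZ_lop dZb_lop by (simp add: lop_cnj)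

lemma sm_det:
  fixes M :: "'x::real_normed_vector \<Rightarrow> complex^'n::finite^'n"
  assumes S: "open S" and M: "\<And>i j. sm S (\<lambda>q. M q $ i $ j)"
  shows "sm S (\<lambda>q. det (M q))"
  unfolding det_def
proof (rule sm_sum[OF S])
  show "finite {p. p permutes (UNIV::'n set)}" by (simp add: finite_permutations)
  fix p :: "'n \<Rightarrow> 'n"
  show "sm S (\<lambda>q. of_int (sign p) * (\<Prod>i\<in>UNIV. M q $ i $ p i))"
    by (rule sm_mult[OF S sm_const[OF S] sm_prod[OF S]]) (simp_all add: M)
qed

lemma minv_facts:
  fixes T :: "complex^'n::finite^'n"
  assumes "\<And>x. T *v x = 0 \<Longrightarrow> x = 0"
  shows "T ** matrix_inv T = mat 1" "matrix_inv T ** T = mat 1" "det T \<noteq> 0"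
proof -
  have inv: "invertible T"
    unfolding invertible_left_inverse matrix_left_invertible_ker using assms by blast
  then have ex: "\<exists>A'. T ** A' = mat 1 \<and> A' ** T = mat 1" unfolding invertible_def .
  show "T ** matrix_inv T = mat 1" "matrix_inv T ** T = mat 1"
    unfolding matrix_inv_def using someI_ex[OF ex] by auto
  show "det T \<noteq> 0" using inv invertible_det_nz by blast
qed

lemma minv_cramer:
  fixes T :: "complex^'n::finite^'n"
  assumes d: "det T \<noteq> 0" and TH: "T ** H = mat 1"
  shows "H $ a $ b = det (\<chi> i j. if j = a then (axis b 1 :: complex^'n) $ i else T$i$j) / det T"
proof -
  have "T *v (\<chi> k. H $ k $ b) = axis b 1"
  proof -
    have "T *v (\<chi> k. H $ k $ b) = (\<chi> i. (T ** H) $ i $ b)"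
      by (simp add: vec_eq_iff matrix_vector_mult_def matrix_matrix_mult_def)
    then show ?thesis using TH by (simp add: vec_eq_iff mat_def axis_def)
  qed
  then have "(\<chi> k. H $ k $ b) = (\<chi> k. det (\<chi> i j. if j = k then (axis b 1 :: complex^'n) $ i else T$i$j) / det T)"
    using cramer[OF d] by blast
  then show ?thesis by (simp add: vec_eq_iff)
qed


locale lsetup =
  fixes Sg :: "complex set" and U :: "(complex^'n::finite) set"
    and g0 :: "complex^'n \<Rightarrow> 'n \<Rightarrow> 'n \<Rightarrow> complex"
    and \<phi> :: "complex \<times> (complex^'n) \<Rightarrow> real"
  assumes opSg: "open Sg" and kaehler: "kaehler_metric_on U g0"
    and smooth: "smooth_on (Sg \<times> U) \<phi>"
    and pos: "\<forall>p\<in>Sg \<times> U. \<forall>v::complex^'n. v \<noteq> 0 \<longrightarrow>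
                Re (\<Sum>a\<in>UNIV. \<Sum>b\<in>UNIV. gmet g0 \<phi> p a b * v$a * cnj (v$b)) > 0"
    and MA: "\<forall>p\<in>Sg \<times> U. det (MAmat g0 \<phi> p) = 0"
begin

definition "S = Sg \<times> U"
definition "Phi = phic \<phi>"
definition "gg a b p = gmet g0 \<phi> p a b"
definition "G0f a b p = g0 (snd p) a b"
definition "et a = eta g0 \<phi> a"
definition "etb a = etab g0 \<phi> a"
definition "PP b = dZ (dWb b Phi)"

lemma openU: "open U" using kaehler unfolding kaehler_metric_on_def by blast
lemma openS: "open S" unfolding S_def using opSg openU by (rule open_Times)
lemma smd: "sm S F \<Longrightarrow> p \<in> S \<Longrightarrow> F differentiable (at p)" by (rule sm_differentiable)
lemma smD: "isop D \<Longrightarrow> sm S F \<Longrightarrow> sm S (D F)" using isop_sm openS by blast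

lemma Phi_eq: "Phi = (\<lambda>p. of_real (\<phi> p))" by (simp add: Phi_def phic_def fun_eq_iff)
lemma smPhi: "sm S Phi"
  unfolding Phi_eq S_def by (rule sm_linear[OF openS[unfolded S_def] bounded_linear_of_real smooth_on_sm[OF smooth]])
lemma Phi_cnj: "(\<lambda>q. cnj (Phi q)) = Phi" by (simp add: Phi_eq)

lemma smg0: "sm U (\<lambda>w. g0 w a b)"
  using kaehler unfolding kaehler_metric_on_def by (blast intro: smooth_on_sm)
lemma smG0: "sm S (G0f a b)"
proof -
  have "sm S (\<lambda>p. g0 (snd p) a b)" by (rule sm_snd[OF openS openU _ smg0]) (auto simp: S_def)
  then show ?thesis unfolding G0f_def[abs_def] .
qed
lemma gg_eq: "gg a b = (\<lambda>p. G0f a b p + dW a (dWb b Phi) p)"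
  by (simp add: fun_eq_iff gg_def gmet_def G0f_def Phi_def)
lemma smgg: "sm S (gg a b)"
  unfolding gg_eq by (rule sm_add[OF openS smG0 smD[OF isop_dW smD[OF isop_dWb smPhi]]])

lemma g0d: "q \<in> S \<Longrightarrow> (\<lambda>w. g0 w a b) differentiable (at (snd q))"
  using sm_differentiable[OF smg0] by (auto simp: S_def)
lemma G0_herm: "q \<in> S \<Longrightarrow> cnj (G0f a b q) = G0f b a q"
  using kaehler unfolding kaehler_metric_on_def G0f_def S_def by auto
lemma G0_dZ: "q \<in> S \<Longrightarrow> dZ (G0f a b) q = 0"
  unfolding G0f_def[abs_def] by (rule dZ_snd[OF g0d])
lemma G0_dZb: "q \<in> S \<Longrightarrow> dZb (G0f a b) q = 0"
  unfolding G0f_def[abs_def] by (rule dZb_snd[OF g0d])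
lemma G0_kahler: "q \<in> S \<Longrightarrow> dW c (G0f a b) q = dW a (G0f c b) q"
proof -
  assume q: "q \<in> S"
  have "dWv c (\<lambda>u. g0 u a b) (snd q) = dWv a (\<lambda>u. g0 u c b) (snd q)"
    using kaehler q unfolding kaehler_metric_on_def S_def by auto
  then show ?thesis unfolding G0f_def[abs_def] dW_snd[OF g0d[OF q]] .
qed
lemma G0_ckahler: "q \<in> S \<Longrightarrow> dWb c (G0f a b) q = dWb b (G0f a c) q"
proof -
  assume q: "q \<in> S"
  have d: "\<And>a b. G0f a b differentiable (at q)" "\<And>a b. (\<lambda>q. cnj (G0f a b q)) differentiable (at q)"
    using smd[OF smG0 q] smd[OF sm_cnj[OF openS smG0] q] by auto
  have "dWb c (G0f a b) q = cnj (dW c (\<lambda>q. cnj (G0f a b q)) q)"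
    using cnj_dW[OF d(2), of c] by simp
  also have "dW c (\<lambda>q. cnj (G0f a b q)) q = dW c (G0f b a) q"
    by (rule isop_cong[OF isop_dW openS q]) (simp add: G0_herm)
  also have "\<dots> = dW b (G0f c a) q" by (rule G0_kahler[OF q])
  also have "cnj \<dots> = dWb b (\<lambda>q. cnj (G0f c a q)) q" by (rule cnj_dW[OF d(1)])
  also have "\<dots> = dWb b (G0f a c) q"
    by (rule isop_cong[OF isop_dWb openS q]) (simp add: G0_herm)
  finally show ?thesis .
qed

lemma Phid: "q \<in> S \<Longrightarrow> isop D \<Longrightarrow> D Phi differentiable (at q)"
  using smd[OF smD[OF _ smPhi]] by blast
lemma Phid2: "q \<in> S \<Longrightarrow> isop D1 \<Longrightarrow> isop D2 \<Longrightarrow> D1 (D2 Phi) differentiable (at q)"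
  using smd[OF smD[OF _ smD[OF _ smPhi]]] by blast

lemma cnj_Phi1: "q \<in> S \<Longrightarrow> cnj (dWb b Phi q) = dW b Phi q"
  using cnj_dWb[OF smd[OF smPhi], of q b] by (simp add: Phi_cnj)
lemma cnj_Phi1': "q \<in> S \<Longrightarrow> cnj (dZb Phi q) = dZ Phi q"
  using cnj_dZb[OF smd[OF smPhi], of q] by (simp add: Phi_cnj)
lemma cnj_Phi1'': "q \<in> S \<Longrightarrow> cnj (dZ Phi q) = dZb Phi q"
  using cnj_dZ[OF smd[OF smPhi], of q] by (simp add: Phi_cnj)

lemma gg_herm: "q \<in> S \<Longrightarrow> cnj (gg a b q) = gg b a q"
proof -
  assume q: "q \<in> S"
  have "cnj (dW a (dWb b Phi) q) = dWb a (\<lambda>q. cnj (dWb b Phi q)) q"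
    by (rule cnj_dW[OF Phid[OF q isop_dWb]])
  also have "\<dots> = dWb a (dW b Phi) q"
    by (rule isop_cong[OF isop_dWb openS q]) (simp add: cnj_Phi1)
  also have "\<dots> = dW b (dWb a Phi) q"
    by (rule isop_comm[OF isop_dWb isop_dW openS q smPhi])
  finally show ?thesis unfolding gg_eq using G0_herm[OF q] by simp
qed

lemma gg_kahler: "q \<in> S \<Longrightarrow> dW c (gg a b) q = dW a (gg c b) q"
proof -
  assume q: "q \<in> S"
  have e: "dW c (gg a b) q = dW c (G0f a b) q + dW c (dW a (dWb b Phi)) q" for a b c
    unfolding gg_eq by (rule isop_add[OF isop_dW smd[OF smG0 q] Phid2[OF q isop_dW isop_dWb]])
  have "dW c (dW a (dWb b Phi)) q = dW a (dW c (dWb b Phi)) q"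
    by (rule isop_comm[OF isop_dW isop_dW openS q smD[OF isop_dWb smPhi]])
  then show ?thesis unfolding e using G0_kahler[OF q] by simp
qed

lemma gg_ckahler: "q \<in> S \<Longrightarrow> dWb c (gg a b) q = dWb b (gg a c) q"
proof -
  assume q: "q \<in> S"
  have e: "dWb c (gg a b) q = dWb c (G0f a b) q + dWb c (dW a (dWb b Phi)) q" for a b c
    unfolding gg_eq by (rule isop_add[OF isop_dWb smd[OF smG0 q] Phid2[OF q isop_dW isop_dWb]])
  have "dWb c (dW a (dWb b Phi)) q = dW a (dWb c (dWb b Phi)) q"
    by (rule isop_comm[OF isop_dWb isop_dW openS q smD[OF isop_dWb smPhi]])
  also have "\<dots> = dW a (dWb b (dWb c Phi)) q"
    by (rule isop_cong[OF isop_dW openS q]) (rule isop_comm[OF isop_dWb isop_dWb openS _ smPhi])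
  also have "\<dots> = dWb b (dW a (dWb c Phi)) q"
    by (rule isop_comm[OF isop_dW isop_dWb openS q smD[OF isop_dWb smPhi]])
  finally show ?thesis unfolding e using G0_ckahler[OF q] by simp
qed

lemma gg_dZ: "q \<in> S \<Longrightarrow> dZ (gg a b) q = dZ (dW a (dWb b Phi)) q"
  unfolding gg_eq by (simp add: isop_add[OF isop_dZ smd[OF smG0] Phid2[OF _ isop_dW isop_dWb]] G0_dZ)
lemma gg_dZb: "q \<in> S \<Longrightarrow> dZb (gg a b) q = dZb (dW a (dWb b Phi)) q"
  unfolding gg_eq by (simp add: isop_add[OF isop_dZb smd[OF smG0] Phid2[OF _ isop_dW isop_dWb]] G0_dZb)

end


lemma sum_option_split:
  fixes f :: "'n::finite option \<Rightarrow> 'b::comm_monoid_add"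
  shows "(\<Sum>j\<in>UNIV. f j) = f None + (\<Sum>b\<in>UNIV. f (Some b))"
proof -
  have "(\<Sum>j\<in>UNIV. f j) = (\<Sum>j\<in>insert None (range Some). f j)" by (simp add: UNIV_option_conv)
  also have "\<dots> = f None + (\<Sum>j\<in>range Some. f j)" by (subst sum.insert) auto
  also have "(\<Sum>j\<in>range Some. f j) = (\<Sum>b\<in>UNIV. f (Some b))" by (subst sum.reindex) (auto simp: inj_on_def)
  finally show ?thesis .
qed

context lsetup
begin

definition "Tm q = transpose (gmat g0 \<phi> q)"

lemma Tm_mv: "(Tm q *v x) $ b = (\<Sum>a\<in>UNIV. gg a b q * x$a)"
  by (simp add: Tm_def matrix_vector_mult_def transpose_def gmat_def gg_def)

lemma posS: "q \<in> S \<Longrightarrow> v \<noteq> 0 \<Longrightarrow> Re (\<Sum>a\<in>UNIV. \<Sum>b\<in>UNIV. gg a b q * v$a * cnj (v$b)) > 0"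
  using pos unfolding S_def gg_def by blast

lemma ker1: assumes q: "q \<in> S" and x: "\<And>b. (\<Sum>a\<in>UNIV. gg a b q * x$a) = 0" shows "x = 0"
proof (rule ccontr)
  assume "x \<noteq> 0"
  from posS[OF q this] have "Re (\<Sum>a\<in>UNIV. \<Sum>b\<in>UNIV. gg a b q * x$a * cnj (x$b)) > 0" .
  moreover have "(\<Sum>a\<in>UNIV. \<Sum>b\<in>UNIV. gg a b q * x$a * cnj (x$b)) = (\<Sum>b\<in>UNIV. cnj (x$b) * (\<Sum>a\<in>UNIV. gg a b q * x$a))"
    by (subst sum.swap) (simp add: sum_distrib_left algebra_simps)
  ultimately show False using x by simp
qed

lemma ker2: assumes q: "q \<in> S" and y: "\<And>a. (\<Sum>b\<in>UNIV. gg a b q * y$b) = 0" shows "y = 0"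
proof (rule ccontr)
  assume "y \<noteq> 0"
  define v where "v = (\<chi> a. cnj (y$a))"
  have "v \<noteq> 0" using \<open>y \<noteq> 0\<close> unfolding v_def by (auto simp: vec_eq_iff)
  from posS[OF q this] have "Re (\<Sum>a\<in>UNIV. \<Sum>b\<in>UNIV. gg a b q * v$a * cnj (v$b)) > 0" .
  moreover have "(\<Sum>a\<in>UNIV. \<Sum>b\<in>UNIV. gg a b q * v$a * cnj (v$b)) = (\<Sum>a\<in>UNIV. cnj (y$a) * (\<Sum>b\<in>UNIV. gg a b q * y$b))"
    unfolding v_def by (simp add: sum_distrib_left algebra_simps)
  ultimately show False using y by simp
qed

lemma Tm_ker: "q \<in> S \<Longrightarrow> Tm q *v x = 0 \<Longrightarrow> x = 0"
  using ker1[of q x] by (metis Tm_mv zero_index)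

lemma ginv_eq: "ginv g0 \<phi> q a b = matrix_inv (Tm q) $ a $ b"
  by (simp add: ginv_def Tm_def)

lemma ginv_r: "q \<in> S \<Longrightarrow> (\<Sum>b\<in>UNIV. ginv g0 \<phi> q a b * gg c b q) = (if a = c then 1 else 0)"
proof -
  assume q: "q \<in> S"
  have "(matrix_inv (Tm q) ** Tm q) $ a $ c = (if a = c then 1 else 0)"
    using minv_facts(2)[OF Tm_ker[OF q]] by (simp add: mat_def)
  then show ?thesis by (simp add: matrix_matrix_mult_def ginv_eq Tm_def transpose_def gmat_def gg_def)
qed

lemma ginv_l: "q \<in> S \<Longrightarrow> (\<Sum>a\<in>UNIV. gg a b q * ginv g0 \<phi> q a c) = (if b = c then 1 else 0)"
proof -
  assume q: "q \<in> S"
  have "(Tm q ** matrix_inv (Tm q)) $ b $ c = (if b = c then 1 else 0)"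
    using minv_facts(1)[OF Tm_ker[OF q]] by (simp add: mat_def)
  then show ?thesis by (simp add: matrix_matrix_mult_def ginv_eq Tm_def transpose_def gmat_def gg_def)
qed

lemma sm_ginv: "sm S (\<lambda>q. ginv g0 \<phi> q a b)"
proof -
  define N where "N q = (\<chi> i j. if j = a then (axis b 1 :: complex^'n) $ i else Tm q $i$j)" for q
  have e: "ginv g0 \<phi> q a b = det (N q) / det (Tm q)" if q: "q \<in> S" for q
    unfolding ginv_eq N_def
    by (rule minv_cramer[OF minv_facts(3)[OF Tm_ker[OF q]] minv_facts(1)[OF Tm_ker[OF q]]])
  have Tij: "sm S (\<lambda>q. Tm q $ i $ j)" for i j
    unfolding Tm_def transpose_def gmat_def using smgg[of j i] unfolding gg_def[abs_def] by simp
  have Nij: "sm S (\<lambda>q. N q $ i $ j)" for i j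
    by (cases "j = a") (simp_all add: N_def Tij openS)
  have "sm S (\<lambda>q. det (N q) / det (Tm q))"
    by (rule sm_divide[OF openS sm_det[OF openS Nij] sm_det[OF openS Tij]])
       (rule minv_facts(3)[OF Tm_ker])
  then show ?thesis by (rule sm_cong[OF openS, rotated]) (simp add: e)
qed

lemma et_eq: "et a = (\<lambda>q. - (\<Sum>b\<in>UNIV. ginv g0 \<phi> q a b * PP b q))"
  by (simp add: fun_eq_iff et_def eta_def PP_def Phi_def)
lemma etb_eq: "etb a = (\<lambda>q. cnj (et a q))"
  by (simp add: fun_eq_iff et_def etb_def etab_def)
lemma smPP: "sm S (PP b)" unfolding PP_def by (rule smD[OF isop_dZ smD[OF isop_dWb smPhi]])
lemma smet: "sm S (et a)"
  unfolding et_eq by (intro sm_minus[OF openS] sm_sum[OF openS] sm_mult[OF openS] sm_ginv smPP finite_class.finite_UNIV)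
lemma smetb: "sm S (etb a)"
  unfolding etb_eq by (rule sm_cnj[OF openS smet])

lemma E1: "q \<in> S \<Longrightarrow> (\<Sum>a\<in>UNIV. et a q * gg a b q) = - PP b q"
proof -
  assume q: "q \<in> S"
  have "(\<Sum>a\<in>UNIV. et a q * gg a b q) = (\<Sum>a\<in>UNIV. - (\<Sum>c\<in>UNIV. ginv g0 \<phi> q a c * PP c q) * gg a b q)"
    unfolding et_eq ..
  also have "\<dots> = (\<Sum>a\<in>UNIV. - (\<Sum>c\<in>UNIV. PP c q * (gg a b q * ginv g0 \<phi> q a c)))"
    by (rule sum.cong) (simp_all add: sum_distrib_left sum_distrib_right algebra_simps)
  also have "\<dots> = - (\<Sum>a\<in>UNIV. \<Sum>c\<in>UNIV. PP c q * (gg a b q * ginv g0 \<phi> q a c))"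
    by (simp add: sum_negf)
  also have "\<dots> = - (\<Sum>c\<in>UNIV. PP c q * (\<Sum>a\<in>UNIV. gg a b q * ginv g0 \<phi> q a c))"
    by (subst sum.swap) (simp add: sum_distrib_left)
  also have "\<dots> = - PP b q" by (simp add: ginv_l[OF q] if_distrib sum.delta sum.delta' cong: if_cong)
  finally show ?thesis .
qed

lemma cE1: "q \<in> S \<Longrightarrow> (\<Sum>c\<in>UNIV. etb c q * gg a c q) = - dZb (dW a Phi) q"
proof -
  assume q: "q \<in> S"
  have "cnj (\<Sum>c\<in>UNIV. et c q * gg c a q) = cnj (- PP a q)" by (simp add: E1[OF q])
  moreover have "cnj (\<Sum>c\<in>UNIV. et c q * gg c a q) = (\<Sum>c\<in>UNIV. etb c q * gg a c q)"
    by (simp add: etb_eq gg_herm[OF q])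
  moreover have "cnj (PP a q) = dZb (dW a Phi) q"
  proof -
    have "cnj (PP a q) = dZb (\<lambda>q. cnj (dWb a Phi q)) q" unfolding PP_def by (rule cnj_dZ[OF Phid[OF q isop_dWb]])
    also have "\<dots> = dZb (dW a Phi) q" by (rule isop_cong[OF isop_dZb openS q]) (simp add: cnj_Phi1)
    finally show ?thesis .
  qed
  ultimately show ?thesis by simp
qed


lemma D_summult:
  fixes F G :: "'n \<Rightarrow> complex \<times> (complex^'n) \<Rightarrow> complex"
  assumes D: "isop D" and p: "p \<in> S" and F: "\<And>a. sm S (F a)" and G: "\<And>a. sm S (G a)"
  shows "D (\<lambda>q. \<Sum>a\<in>UNIV. F a q * G a q) p = (\<Sum>a\<in>UNIV. D (F a) p * G a p + F a p * D (G a) p)"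
proof -
  have "D (\<lambda>q. \<Sum>a\<in>UNIV. F a q * G a q) p = (\<Sum>a\<in>UNIV. D (\<lambda>q. F a q * G a q) p)"
    apply (rule isop_sum[OF D])
     apply simp
    apply (rule smd[OF sm_mult[OF openS F G] p])
    done
  also have "\<dots> = (\<Sum>a\<in>UNIV. D (F a) p * G a p + F a p * D (G a) p)"
    by (rule sum.cong[OF refl]) (rule isop_mult[OF D smd[OF F p] smd[OF G p]])
  finally show ?thesis .
qed

lemma MAmat_ent:
  "MAmat g0 \<phi> q $ None $ None = dZ (dZb Phi) q"
  "MAmat g0 \<phi> q $ None $ Some b = PP b q"
  "MAmat g0 \<phi> q $ Some a $ None = dW a (dZb Phi) q"
  "MAmat g0 \<phi> q $ Some a $ Some b = gg a b q"
  by (simp_all add: MAmat_def Phi_def PP_def gg_def)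

lemma MA_c: assumes q: "q \<in> S" shows "dZ (dZb Phi) q + (\<Sum>a\<in>UNIV. et a q * dW a (dZb Phi) q) = 0"
proof -
  define M where "M = MAmat g0 \<phi> q"
  have "det M = 0" using MA q unfolding S_def M_def by blast
  then have "\<not> (\<forall>x. M *v x = 0 \<longrightarrow> x = 0)" using minv_facts(3)[of M] by blast
  then obtain x where x: "M *v x = 0" "x \<noteq> 0" by blast
  define \<xi> where "\<xi> = x $ None"
  define y where "y = (\<chi> b. x $ Some b)"
  have row: "(M *v x) $ i = M$i$None * \<xi> + (\<Sum>b\<in>UNIV. M$i$(Some b) * y$b)" for i
    unfolding matrix_vector_mult_def by (simp add: sum_option_split \<xi>_def y_def)
  have rS: "dW a (dZb Phi) q * \<xi> + (\<Sum>b\<in>UNIV. gg a b q * y$b) = 0" for a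
    using row[of "Some a"] x(1) by (simp add: M_def MAmat_ent)
  have rN: "dZ (dZb Phi) q * \<xi> + (\<Sum>b\<in>UNIV. PP b q * y$b) = 0"
    using row[of None] x(1) by (simp add: M_def MAmat_ent)
  have xi: "\<xi> \<noteq> 0"
  proof
    assume "\<xi> = 0"
    then have "y = 0" using rS by (intro ker2[OF q]) simp
    then have "x = 0" using \<open>\<xi> = 0\<close> unfolding \<xi>_def y_def vec_eq_iff
      by (metis (full_types) not_Some_eq vec_lambda_beta zero_index)
    then show False using x(2) by simp
  qed
  have "(\<Sum>b\<in>UNIV. PP b q * y$b) = (\<Sum>b\<in>UNIV. - (\<Sum>a\<in>UNIV. et a q * gg a b q) * y$b)"
    using E1[OF q] by simp
  also have "\<dots> = - (\<Sum>b\<in>UNIV. \<Sum>a\<in>UNIV. et a q * (gg a b q * y$b))"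
    by (simp add: sum_distrib_right sum_negf mult.assoc)
  also have "\<dots> = - (\<Sum>a\<in>UNIV. \<Sum>b\<in>UNIV. et a q * (gg a b q * y$b))"
    by (subst sum.swap) (rule refl)
  also have "\<dots> = - (\<Sum>a\<in>UNIV. et a q * (\<Sum>b\<in>UNIV. gg a b q * y$b))"
    by (simp add: sum_distrib_left)
  also have "\<dots> = \<xi> * (\<Sum>a\<in>UNIV. et a q * dW a (dZb Phi) q)"
  proof -
    have "(\<Sum>b\<in>UNIV. gg a b q * y$b) = - (dW a (dZb Phi) q * \<xi>)" for a using rS[of a] by (simp add: eq_neg_iff_add_eq_0 add.commute)
    then show ?thesis by (simp add: sum_distrib_left sum_negf algebra_simps)
  qed
  finally have "\<xi> * (dZ (dZb Phi) q + (\<Sum>a\<in>UNIV. et a q * dW a (dZb Phi) q)) = 0"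
    using rN by (simp add: algebra_simps)
  then show ?thesis using xi by simp
qed

lemma MA_c': assumes q: "q \<in> S" shows "dZb (dZ Phi) q + (\<Sum>c\<in>UNIV. etb c q * PP c q) = 0"
proof -
  have "cnj (dZ (dZb Phi) q + (\<Sum>a\<in>UNIV. et a q * dW a (dZb Phi) q)) = 0" using MA_c[OF q] by simp
  moreover have "cnj (dZ (dZb Phi) q) = dZb (dZ Phi) q"
  proof -
    have "cnj (dZ (dZb Phi) q) = dZb (\<lambda>q. cnj (dZb Phi q)) q" by (rule cnj_dZ[OF Phid[OF q isop_dZb]])
    also have "\<dots> = dZb (dZ Phi) q" by (rule isop_cong[OF isop_dZb openS q]) (simp add: cnj_Phi1')
    finally show ?thesis .
  qed
  moreover have "cnj (dW a (dZb Phi) q) = PP a q" for a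
  proof -
    have "cnj (dW a (dZb Phi) q) = dWb a (\<lambda>q. cnj (dZb Phi q)) q" by (rule cnj_dW[OF Phid[OF q isop_dZb]])
    also have "\<dots> = dWb a (dZ Phi) q" by (rule isop_cong[OF isop_dWb openS q]) (simp add: cnj_Phi1')
    also have "\<dots> = PP a q" unfolding PP_def by (rule isop_comm[OF isop_dWb isop_dZ openS q smPhi])
    finally show ?thesis .
  qed
  ultimately show ?thesis by (simp add: etb_eq)
qed

lemma Dg: assumes p: "p \<in> S"
  shows "dZ (gg a d) p + (\<Sum>c\<in>UNIV. et c p * dW c (gg a d) p) = - (\<Sum>c\<in>UNIV. dW a (et c) p * gg c d p)"
proof -
  have "dW a (\<lambda>q. \<Sum>c\<in>UNIV. et c q * gg c d q) p = dW a (\<lambda>q. - PP d q) p"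
    by (rule isop_cong[OF isop_dW openS p]) (rule E1)
  moreover have "dW a (\<lambda>q. \<Sum>c\<in>UNIV. et c q * gg c d q) p = (\<Sum>c\<in>UNIV. dW a (et c) p * gg c d p + et c p * dW a (gg c d) p)"
    by (rule D_summult[OF isop_dW p smet smgg])
  moreover have "dW a (\<lambda>q. - PP d q) p = - dW a (PP d) p" by (rule isop_minus[OF isop_dW smd[OF smPP p]])
  moreover have "dW a (PP d) p = dZ (gg a d) p"
    unfolding PP_def gg_dZ[OF p] by (rule isop_comm[OF isop_dW isop_dZ openS p smD[OF isop_dWb smPhi]])
  moreover have "dW a (gg c d) p = dW c (gg a d) p" for c by (rule gg_kahler[OF p])
  ultimately show ?thesis by (simp add: sum.distrib algebra_simps eq_neg_iff_add_eq_0)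
qed

lemma Dbg: assumes p: "p \<in> S"
  shows "dZb (gg a b) p + (\<Sum>c\<in>UNIV. etb c p * dWb c (gg a b) p) = - (\<Sum>c\<in>UNIV. dWb b (etb c) p * gg a c p)"
proof -
  have "dWb b (\<lambda>q. \<Sum>c\<in>UNIV. etb c q * gg a c q) p = dWb b (\<lambda>q. - dZb (dW a Phi) q) p"
    by (rule isop_cong[OF isop_dWb openS p]) (rule cE1)
  moreover have "dWb b (\<lambda>q. \<Sum>c\<in>UNIV. etb c q * gg a c q) p = (\<Sum>c\<in>UNIV. dWb b (etb c) p * gg a c p + etb c p * dWb b (gg a c) p)"
    by (rule D_summult[OF isop_dWb p smetb smgg])
  moreover have "dWb b (\<lambda>q. - dZb (dW a Phi) q) p = - dWb b (dZb (dW a Phi)) p"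
    by (rule isop_minus[OF isop_dWb Phid2[OF p isop_dZb isop_dW]])
  moreover have "dWb b (dZb (dW a Phi)) p = dZb (gg a b) p"
  proof -
    have "dWb b (dZb (dW a Phi)) p = dZb (dWb b (dW a Phi)) p"
      by (rule isop_comm[OF isop_dWb isop_dZb openS p smD[OF isop_dW smPhi]])
    also have "\<dots> = dZb (dW a (dWb b Phi)) p"
      by (rule isop_cong[OF isop_dZb openS p]) (rule isop_comm[OF isop_dWb isop_dW openS _ smPhi])
    finally show ?thesis using gg_dZb[OF p] by simp
  qed
  moreover have "dWb b (gg a c) p = dWb c (gg a b) p" for c by (rule gg_ckahler[OF p])
  ultimately show ?thesis by (simp add: sum.distrib algebra_simps eq_neg_iff_add_eq_0)
qed

lemma PP_sym: assumes p: "p \<in> S" shows "dWb b (PP c) p = dWb c (PP b) p"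
proof -
  have "dWb b (PP c) p = dZ (dWb b (dWb c Phi)) p"
    unfolding PP_def by (rule isop_comm[OF isop_dWb isop_dZ openS p smD[OF isop_dWb smPhi]])
  also have "\<dots> = dZ (dWb c (dWb b Phi)) p"
    by (rule isop_cong[OF isop_dZ openS p]) (rule isop_comm[OF isop_dWb isop_dWb openS _ smPhi])
  also have "\<dots> = dWb c (PP b) p"
    unfolding PP_def by (rule isop_comm[OF isop_dZ isop_dWb openS p smD[OF isop_dWb smPhi]])
  finally show ?thesis .
qed


lemma E1_D: assumes D: "isop D" and q: "q \<in> S"
  shows "(\<Sum>a\<in>UNIV. D (et a) q * gg a b q + et a q * D (gg a b) q) = - D (PP b) q"
proof -
  have "D (\<lambda>q. \<Sum>c\<in>UNIV. et c q * gg c b q) q = D (\<lambda>q. - PP b q) q"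
    by (rule isop_cong[OF D openS q]) (rule E1)
  moreover have "D (\<lambda>q. \<Sum>c\<in>UNIV. et c q * gg c b q) q = (\<Sum>a\<in>UNIV. D (et a) q * gg a b q + et a q * D (gg a b) q)"
    by (rule D_summult[OF D q smet smgg])
  moreover have "D (\<lambda>q. - PP b q) q = - D (PP b) q" by (rule isop_minus[OF D smd[OF smPP q]])
  ultimately show ?thesis by simp
qed

lemma MA_D: assumes D: "isop D" and q: "q \<in> S"
  shows "D (dZb (dZ Phi)) q + (\<Sum>c\<in>UNIV. D (etb c) q * PP c q + etb c q * D (PP c) q) = 0"
proof -
  have "D (\<lambda>q. dZb (dZ Phi) q + (\<Sum>c\<in>UNIV. etb c q * PP c q)) q = D (\<lambda>q. 0) q"
    by (rule isop_cong[OF D openS q]) (rule MA_c')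
  moreover have "D (\<lambda>q. dZb (dZ Phi) q + (\<Sum>c\<in>UNIV. etb c q * PP c q)) q
     = D (dZb (dZ Phi)) q + D (\<lambda>q. \<Sum>c\<in>UNIV. etb c q * PP c q) q"
    by (rule isop_add[OF D Phid2[OF q isop_dZb isop_dZ] smd[OF sm_sum[OF openS finite_class.finite_UNIV sm_mult[OF openS smetb smPP]] q]])
  moreover have "D (\<lambda>q. \<Sum>c\<in>UNIV. etb c q * PP c q) q = (\<Sum>c\<in>UNIV. D (etb c) q * PP c q + etb c q * D (PP c) q)"
    by (rule D_summult[OF D q smetb smPP])
  ultimately show ?thesis by (simp add: isop_const[OF D])
qed

end

lemma alg_Dbeta:
  fixes X g H ZG WP E dE P :: "'n::finite \<Rightarrow> complex" and gac Y WG :: "'n \<Rightarrow> 'n \<Rightarrow> complex"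
  assumes A: "(\<Sum>a\<in>UNIV. X a * g a + H a * ZG a) = - ZP"
    and B: "\<And>c. (\<Sum>a\<in>UNIV. Y a c * g a + H a * WG a c) = - WP c"
    and C: "\<And>a. ZG a + (\<Sum>c\<in>UNIV. E c * WG a c) = - (\<Sum>c\<in>UNIV. dE c * gac a c)"
    and D: "\<And>c. (\<Sum>a\<in>UNIV. H a * gac a c) = - P c"
    and E: "ZP + (\<Sum>c\<in>UNIV. dE c * P c + E c * WP c) = 0"
  shows "(\<Sum>a\<in>UNIV. g a * (X a + (\<Sum>c\<in>UNIV. E c * Y a c))) = 0"
proof -
  have ZG: "ZG a = - (\<Sum>c\<in>UNIV. dE c * gac a c) - (\<Sum>c\<in>UNIV. E c * WG a c)" for a
    using C[of a] by (simp add: algebra_simps eq_neg_iff_add_eq_0)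
  have sX: "(\<Sum>a\<in>UNIV. X a * g a) = - ZP - (\<Sum>a\<in>UNIV. H a * ZG a)"
    using A by (simp add: sum.distrib algebra_simps eq_neg_iff_add_eq_0)
  have sY: "(\<Sum>a\<in>UNIV. Y a c * g a) = - WP c - (\<Sum>a\<in>UNIV. H a * WG a c)" for c
    using B[of c] by (simp add: sum.distrib algebra_simps eq_neg_iff_add_eq_0)
  have t1: "(\<Sum>a\<in>UNIV. g a * (X a + (\<Sum>c\<in>UNIV. E c * Y a c)))
      = (\<Sum>a\<in>UNIV. X a * g a) + (\<Sum>a\<in>UNIV. \<Sum>c\<in>UNIV. E c * (Y a c * g a))"
    by (simp add: distrib_left sum.distrib sum_distrib_left mult.commute mult.left_commute)
  have t2: "(\<Sum>a\<in>UNIV. \<Sum>c\<in>UNIV. E c * (Y a c * g a)) = (\<Sum>c\<in>UNIV. E c * (\<Sum>a\<in>UNIV. Y a c * g a))"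
    by (subst sum.swap) (simp add: sum_distrib_left)
  have t3: "(\<Sum>c\<in>UNIV. E c * (\<Sum>a\<in>UNIV. Y a c * g a)) = (\<Sum>c\<in>UNIV. E c * (- WP c)) - (\<Sum>c\<in>UNIV. \<Sum>a\<in>UNIV. E c * (H a * WG a c))"
    unfolding sY by (simp add: right_diff_distrib sum_subtractf sum_distrib_left)
  have t4: "(\<Sum>a\<in>UNIV. H a * ZG a) = - (\<Sum>a\<in>UNIV. \<Sum>c\<in>UNIV. H a * (dE c * gac a c)) - (\<Sum>a\<in>UNIV. \<Sum>c\<in>UNIV. E c * (H a * WG a c))"
    unfolding ZG by (simp add: right_diff_distrib sum_subtractf sum_distrib_left sum_negf mult.commute mult.left_commute)
  have t5: "(\<Sum>a\<in>UNIV. \<Sum>c\<in>UNIV. H a * (dE c * gac a c)) = (\<Sum>c\<in>UNIV. dE c * (\<Sum>a\<in>UNIV. H a * gac a c))"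
    by (subst sum.swap) (simp add: sum_distrib_left mult.commute mult.left_commute)
  have t6: "(\<Sum>a\<in>UNIV. \<Sum>c\<in>UNIV. E c * (H a * WG a c)) = (\<Sum>c\<in>UNIV. \<Sum>a\<in>UNIV. E c * (H a * WG a c))"
    by (rule sum.swap)
  have "(\<Sum>a\<in>UNIV. g a * (X a + (\<Sum>c\<in>UNIV. E c * Y a c)))
     = - ZP + (\<Sum>c\<in>UNIV. dE c * (- P c)) + (\<Sum>c\<in>UNIV. E c * (- WP c))"
    unfolding t1 sX t2 t3 t4 t5 t6 D by (simp add: algebra_simps)
  also have "\<dots> = - (ZP + (\<Sum>c\<in>UNIV. dE c * P c + E c * WP c))"
    by (simp add: sum.distrib sum_negf)
  finally show ?thesis using E by simp
qed

context lsetup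
begin

lemma dWb_dZb_dZ: assumes q: "q \<in> S" shows "dWb b (dZb (dZ Phi)) q = dZb (PP b) q"
proof -
  have "dWb b (dZb (dZ Phi)) q = dZb (dWb b (dZ Phi)) q"
    by (rule isop_comm[OF isop_dWb isop_dZb openS q smD[OF isop_dZ smPhi]])
  also have "\<dots> = dZb (PP b) q" unfolding PP_def
    by (rule isop_cong[OF isop_dZb openS q]) (rule isop_comm[OF isop_dWb isop_dZ openS _ smPhi])
  finally show ?thesis .
qed

lemma Dbeta: assumes q: "q \<in> S" shows "dZb (et r) q + (\<Sum>c\<in>UNIV. etb c q * dWb c (et r) q) = 0"
proof -
  define y where "y = (\<chi> a. dZb (et a) q + (\<Sum>c\<in>UNIV. etb c q * dWb c (et a) q))"
  have "(\<Sum>a\<in>UNIV. gg a b q * y$a) = 0" for b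
  proof -
    have "(\<Sum>a\<in>UNIV. gg a b q * (dZb (et a) q + (\<Sum>c\<in>UNIV. etb c q * dWb c (et a) q))) = 0"
    proof (rule alg_Dbeta)
      show "(\<Sum>a\<in>UNIV. dZb (et a) q * gg a b q + et a q * dZb (gg a b) q) = - dZb (PP b) q"
        by (rule E1_D[OF isop_dZb q])
      show "(\<Sum>a\<in>UNIV. dWb c (et a) q * gg a b q + et a q * dWb c (gg a b) q) = - dWb c (PP b) q" for c
        by (rule E1_D[OF isop_dWb q])
      show "dZb (gg a b) q + (\<Sum>c\<in>UNIV. etb c q * dWb c (gg a b) q) = - (\<Sum>c\<in>UNIV. dWb b (etb c) q * gg a c q)" for a
        by (rule Dbg[OF q])
      show "(\<Sum>a\<in>UNIV. et a q * gg a c q) = - PP c q" for c by (rule E1[OF q])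
      show "dZb (PP b) q + (\<Sum>c\<in>UNIV. dWb b (etb c) q * PP c q + etb c q * dWb c (PP b) q) = 0"
        using MA_D[OF isop_dWb q, of b] unfolding dWb_dZb_dZ[OF q] PP_sym[OF q, of b] .
    qed
    then show ?thesis unfolding y_def by simp
  qed
  then have "y = 0" by (rule ker1[OF q])
  then show ?thesis unfolding y_def vec_eq_iff by simp
qed

lemma curv_formula: assumes p: "p \<in> S"
  shows "dZb (dW a (et r)) p + (\<Sum>c\<in>UNIV. etb c p * dWb c (dW a (et r)) p) = - (\<Sum>i\<in>UNIV. dWb i (et r) p * dW a (etb i) p)"
proof -
  have "dW a (\<lambda>q. dZb (et r) q + (\<Sum>c\<in>UNIV. etb c q * dWb c (et r) q)) p = dW a (\<lambda>q. 0) p"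
    by (rule isop_cong[OF isop_dW openS p]) (rule Dbeta)
  moreover have "dW a (\<lambda>q. dZb (et r) q + (\<Sum>c\<in>UNIV. etb c q * dWb c (et r) q)) p
     = dW a (dZb (et r)) p + dW a (\<lambda>q. \<Sum>c\<in>UNIV. etb c q * dWb c (et r) q) p"
    by (rule isop_add[OF isop_dW smd[OF smD[OF isop_dZb smet] p] smd[OF sm_sum[OF openS finite_class.finite_UNIV sm_mult[OF openS smetb smD[OF isop_dWb smet]]] p]])
  moreover have "dW a (\<lambda>q. \<Sum>c\<in>UNIV. etb c q * dWb c (et r) q) p = (\<Sum>c\<in>UNIV. dW a (etb c) p * dWb c (et r) p + etb c p * dW a (dWb c (et r)) p)"
    by (rule D_summult[OF isop_dW p smetb smD[OF isop_dWb smet]])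
  moreover have "dW a (dZb (et r)) p = dZb (dW a (et r)) p"
    by (rule isop_comm[OF isop_dW isop_dZb openS p smet])
  moreover have "dW a (dWb c (et r)) p = dWb c (dW a (et r)) p" for c
    by (rule isop_comm[OF isop_dW isop_dWb openS p smet])
  ultimately show ?thesis by (simp add: isop_const[OF isop_dW] sum.distrib algebra_simps eq_neg_iff_add_eq_0)
qed

lemma symB: assumes p: "p \<in> S"
  shows "(\<Sum>a\<in>UNIV. dWb i (et a) p * gg a c p) = (\<Sum>a\<in>UNIV. dWb c (et a) p * gg a i p)"
proof -
  have 1: "(\<Sum>a\<in>UNIV. dWb i (et a) p * gg a c p) = - dWb i (PP c) p - (\<Sum>a\<in>UNIV. et a p * dWb i (gg a c) p)"
    using E1_D[OF isop_dWb p, of i c] by (simp add: sum.distrib algebra_simps eq_neg_iff_add_eq_0)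
  have 2: "(\<Sum>a\<in>UNIV. dWb c (et a) p * gg a i p) = - dWb c (PP i) p - (\<Sum>a\<in>UNIV. et a p * dWb c (gg a i) p)"
    using E1_D[OF isop_dWb p, of c i] by (simp add: sum.distrib algebra_simps eq_neg_iff_add_eq_0)
  show ?thesis unfolding 1 2 PP_sym[OF p, of i c] gg_ckahler[OF p, of i _ c] ..
qed

lemma S4: assumes p: "p \<in> S"
  shows "(\<Sum>d\<in>UNIV. ginv g0 \<phi> p r d * (dZ (gg a d) p + (\<Sum>c\<in>UNIV. et c p * dW c (gg a d) p))) = - dW a (et r) p"
proof -
  have "(\<Sum>d\<in>UNIV. ginv g0 \<phi> p r d * (dZ (gg a d) p + (\<Sum>c\<in>UNIV. et c p * dW c (gg a d) p)))
     = - (\<Sum>d\<in>UNIV. \<Sum>c\<in>UNIV. dW a (et c) p * (ginv g0 \<phi> p r d * gg c d p))"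
    unfolding Dg[OF p] by (simp add: sum_distrib_left sum_negf mult.commute mult.left_commute)
  also have "\<dots> = - (\<Sum>c\<in>UNIV. dW a (et c) p * (\<Sum>d\<in>UNIV. ginv g0 \<phi> p r d * gg c d p))"
    by (subst sum.swap) (simp add: sum_distrib_left)
  also have "\<dots> = - dW a (et r) p"
    by (simp add: ginv_r[OF p] if_distrib sum.delta sum.delta' cong: if_cong)
  finally show ?thesis .
qed

end

lemma wzb_cong: "open D \<Longrightarrow> z \<in> D \<Longrightarrow> (\<And>t. t \<in> D \<Longrightarrow> F t = G t) \<Longrightarrow> wzb F z = wzb G z"
  unfolding wzb_def using pd_cong[of D z F G] by simp

lemma alg_form:
  fixes A g :: "'n::finite \<Rightarrow> 'n \<Rightarrow> complex" and s :: "complex^'n"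
  assumes symB: "\<And>i c. (\<Sum>a\<in>UNIV. A a i * g a c) = (\<Sum>a\<in>UNIV. A a c * g a i)"
  defines "v \<equiv> (\<chi> i. \<Sum>c\<in>UNIV. A i c * cnj (s$c))"
  shows "(\<Sum>a\<in>UNIV. \<Sum>b\<in>UNIV. \<Sum>c\<in>UNIV. (- (\<Sum>i\<in>UNIV. A a i * cnj (A i b))) * s$b * cnj (s$c) * g a c)
       = - (\<Sum>a\<in>UNIV. \<Sum>i\<in>UNIV. g a i * v$a * cnj (v$i))"
proof -
  define w where "w i = (\<Sum>b\<in>UNIV. cnj (A i b) * s$b)" for i
  have wv: "cnj (v$i) = w i" for i unfolding v_def w_def by (simp add: mult.commute)
  have "(\<Sum>a\<in>UNIV. \<Sum>b\<in>UNIV. \<Sum>c\<in>UNIV. (- (\<Sum>i\<in>UNIV. A a i * cnj (A i b))) * s$b * cnj (s$c) * g a c)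
      = (\<Sum>a\<in>UNIV. \<Sum>c\<in>UNIV. \<Sum>b\<in>UNIV. (- (\<Sum>i\<in>UNIV. A a i * cnj (A i b))) * s$b * cnj (s$c) * g a c)"
    by (rule sum.cong[OF refl]) (rule sum.swap)
  also have "\<dots> = (\<Sum>a\<in>UNIV. \<Sum>c\<in>UNIV. - (\<Sum>i\<in>UNIV. A a i * w i) * cnj (s$c) * g a c)"
  proof (intro sum.cong refl)
    fix a c
    have "(\<Sum>b\<in>UNIV. (- (\<Sum>i\<in>UNIV. A a i * cnj (A i b))) * s$b * cnj (s$c) * g a c)
        = - (\<Sum>b\<in>UNIV. \<Sum>i\<in>UNIV. A a i * (cnj (A i b) * s$b)) * cnj (s$c) * g a c"
      by (simp add: sum_distrib_left sum_distrib_right sum_negf mult.commute mult.left_commute)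
    also have "(\<Sum>b\<in>UNIV. \<Sum>i\<in>UNIV. A a i * (cnj (A i b) * s$b)) = (\<Sum>i\<in>UNIV. A a i * w i)"
      unfolding w_def by (subst sum.swap) (simp add: sum_distrib_left)
    finally show "(\<Sum>b\<in>UNIV. (- (\<Sum>i\<in>UNIV. A a i * cnj (A i b))) * s$b * cnj (s$c) * g a c)
        = - (\<Sum>i\<in>UNIV. A a i * w i) * cnj (s$c) * g a c" .
  qed
  also have "\<dots> = - (\<Sum>a\<in>UNIV. \<Sum>c\<in>UNIV. \<Sum>i\<in>UNIV. w i * (cnj (s$c) * (A a i * g a c)))"
    by (simp add: sum_distrib_left sum_distrib_right sum_negf mult.commute mult.left_commute)
  also have "\<dots> = - (\<Sum>i\<in>UNIV. w i * (\<Sum>c\<in>UNIV. cnj (s$c) * (\<Sum>a\<in>UNIV. A a i * g a c)))"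
  proof -
    have "(\<Sum>a\<in>UNIV. \<Sum>c\<in>UNIV. \<Sum>i\<in>UNIV. w i * (cnj (s$c) * (A a i * g a c)))
        = (\<Sum>c\<in>UNIV. \<Sum>a\<in>UNIV. \<Sum>i\<in>UNIV. w i * (cnj (s$c) * (A a i * g a c)))" by (rule sum.swap)
    also have "\<dots> = (\<Sum>c\<in>UNIV. \<Sum>i\<in>UNIV. \<Sum>a\<in>UNIV. w i * (cnj (s$c) * (A a i * g a c)))"
      by (rule sum.cong[OF refl]) (rule sum.swap)
    also have "\<dots> = (\<Sum>i\<in>UNIV. \<Sum>c\<in>UNIV. \<Sum>a\<in>UNIV. w i * (cnj (s$c) * (A a i * g a c)))" by (rule sum.swap)
    also have "\<dots> = (\<Sum>i\<in>UNIV. w i * (\<Sum>c\<in>UNIV. cnj (s$c) * (\<Sum>a\<in>UNIV. A a i * g a c)))"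
      by (simp add: sum_distrib_left)
    finally show ?thesis by simp
  qed
  also have "\<dots> = - (\<Sum>i\<in>UNIV. w i * (\<Sum>a\<in>UNIV. g a i * v$a))"
  proof -
    have "(\<Sum>c\<in>UNIV. cnj (s$c) * (\<Sum>a\<in>UNIV. A a i * g a c)) = (\<Sum>a\<in>UNIV. g a i * v$a)" for i
    proof -
      have "(\<Sum>c\<in>UNIV. cnj (s$c) * (\<Sum>a\<in>UNIV. A a i * g a c)) = (\<Sum>c\<in>UNIV. \<Sum>a\<in>UNIV. g a i * (A a c * cnj (s$c)))"
        unfolding symB by (simp add: sum_distrib_left mult.commute mult.left_commute)
      also have "\<dots> = (\<Sum>a\<in>UNIV. g a i * v$a)"
        unfolding v_def by (subst sum.swap) (simp add: sum_distrib_left)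
      finally show ?thesis .
    qed
    then show ?thesis by simp
  qed
  also have "\<dots> = - (\<Sum>a\<in>UNIV. \<Sum>i\<in>UNIV. g a i * v$a * cnj (v$i))"
    unfolding wv[symmetric] by (subst sum.swap) (simp add: sum_distrib_left mult.commute mult.left_commute)
  finally show ?thesis .
qed

lemma qform_real:
  fixes g :: "'n::finite \<Rightarrow> 'n \<Rightarrow> complex" and v :: "complex^'n"
  assumes herm: "\<And>a b. cnj (g a b) = g b a"
  shows "Im (\<Sum>a\<in>UNIV. \<Sum>i\<in>UNIV. g a i * v$a * cnj (v$i)) = 0"
proof -
  have "cnj (\<Sum>a\<in>UNIV. \<Sum>i\<in>UNIV. g a i * v$a * cnj (v$i)) = (\<Sum>a\<in>UNIV. \<Sum>i\<in>UNIV. g i a * v$i * cnj (v$a))"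
    by (simp add: herm mult.commute mult.left_commute)
  also have "\<dots> = (\<Sum>a\<in>UNIV. \<Sum>i\<in>UNIV. g a i * v$a * cnj (v$i))" by (rule sum.swap)
  finally have "cnj (\<Sum>a\<in>UNIV. \<Sum>i\<in>UNIV. g a i * v$a * cnj (v$i)) = (\<Sum>a\<in>UNIV. \<Sum>i\<in>UNIV. g a i * v$a * cnj (v$i))" .
  then have "Im (cnj (\<Sum>a\<in>UNIV. \<Sum>i\<in>UNIV. g a i * v$a * cnj (v$i))) = Im (\<Sum>a\<in>UNIV. \<Sum>i\<in>UNIV. g a i * v$a * cnj (v$i))"
    by (rule arg_cong)
  then show ?thesis by (simp only: cnj.sel(2))
qed

theorem theorem4p2p6:
  fixes \<Sigma> :: "complex set"
    and U :: "(complex^'n::finite) set"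
    and g0 :: "complex^'n \<Rightarrow> 'n \<Rightarrow> 'n \<Rightarrow> complex"
    and \<phi> :: "complex \<times> (complex^'n) \<Rightarrow> real"
    and D :: "complex set"
    and f :: "complex \<Rightarrow> complex^'n"
  assumes dom: "open \<Sigma>" "connected \<Sigma>" "\<Sigma> \<noteq> {}"
    and kaehler: "kaehler_metric_on U g0"
    and smooth: "smooth_on (\<Sigma> \<times> U) \<phi>"
    and pos: "\<forall>p\<in>\<Sigma> \<times> U. \<forall>v::complex^'n. v \<noteq> 0 \<longrightarrow>
                Re (\<Sum>a\<in>UNIV. \<Sum>b\<in>UNIV. gmet g0 \<phi> p a b * v$a * cnj (v$b)) > 0"
    and MA: "\<forall>p\<in>\<Sigma> \<times> U. det (MAmat g0 \<phi> p) = 0"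
    and leafD: "open D" "D \<subseteq> \<Sigma>" "\<forall>z\<in>D. f z \<in> U"
    and leaf: "\<forall>z\<in>D. \<forall>a. ((\<lambda>t. f t $ a) has_field_derivative eta g0 \<phi> a (z, f z)) (at z)"
  shows "\<forall>z\<in>D.
     (\<forall>r a. leaf_curv g0 \<phi> f r a z =
        - (\<Sum>i\<in>UNIV. dWb i (eta g0 \<phi> r) (z, f z) * dW a (etab g0 \<phi> i) (z, f z))) \<and>
     (\<forall>s::complex^'n.
        Im (\<Sum>a\<in>UNIV. \<Sum>b\<in>UNIV. \<Sum>c\<in>UNIV. leaf_curv g0 \<phi> f a b z * s$b * cnj (s$c) * gmet g0 \<phi> (z, f z) a c) = 0 \<and>
        Re (\<Sum>a\<in>UNIV. \<Sum>b\<in>UNIV. \<Sum>c\<in>UNIV. leaf_curv g0 \<phi> f a b z * s$b * cnj (s$c) * gmet g0 \<phi> (z, f z) a c) \<le> 0)"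
proof -
  interpret L: lsetup \<Sigma> U g0 \<phi>
    using dom(1) kaehler smooth pos MA by unfold_locales
  show ?thesis
  proof (intro ballI conjI allI)
    fix z assume z: "z \<in> D"
    define p where "p = (z, f z)"
    have tS: "(t, f t) \<in> L.S" if "t \<in> D" for t using leafD that unfolding L.S_def by auto
    have pS: "p \<in> L.S" unfolding p_def by (rule tS[OF z])
    have fd: "\<forall>a. ((\<lambda>s. f s $ a) has_field_derivative (\<chi> a. L.et a (t, f t)) $ a) (at t)" if "t \<in> D" for t
      using leaf that unfolding L.et_def by simp
    have curv: "leaf_curv g0 \<phi> f r a z = - (\<Sum>i\<in>UNIV. dWb i (L.et r) p * dW a (L.etb i) p)" for r a
    proof -
      define H where "H = (\<lambda>q. - dW a (L.et r) q)"
      have smH: "sm L.S H" unfolding H_def by (rule sm_minus[OF L.openS L.smD[OF isop_dW L.smet]])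
      have inner: "(\<Sum>d\<in>UNIV. ginv g0 \<phi> (t, f t) r d * wz (\<lambda>s. gmet g0 \<phi> (s, f s) a d) t) = H (t, f t)"
        if t: "t \<in> D" for t
      proof -
        have "wz (\<lambda>s. gmet g0 \<phi> (s, f s) a d) t = dZ (L.gg a d) (t, f t) + (\<Sum>c\<in>UNIV. L.et c (t, f t) * dW c (L.gg a d) (t, f t))" for d
        proof -
          have "wz (\<lambda>s. gmet g0 \<phi> (s, f s) a d) t = wz (\<lambda>s. L.gg a d (s, f s)) t" by (simp add: L.gg_def)
          also have "\<dots> = dZ (L.gg a d) (t, f t) + (\<Sum>c\<in>UNIV. (\<chi> a. L.et a (t, f t)) $ c * dW c (L.gg a d) (t, f t))"
            by (rule leaf_chain(1)[OF L.smd[OF L.smgg tS[OF t]] fd[OF t]])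
          finally show ?thesis by simp
        qed
        then show ?thesis unfolding H_def using L.S4[OF tS[OF t], of r a] by simp
      qed
      have "wzb (\<lambda>t. \<Sum>d\<in>UNIV. ginv g0 \<phi> (t, f t) r d * wz (\<lambda>s. gmet g0 \<phi> (s, f s) a d) t) z
          = wzb (\<lambda>t. H (t, f t)) z"
        by (rule wzb_cong[OF leafD(1) z]) (rule inner)
      also have "\<dots> = dZb H (z, f z) + (\<Sum>c\<in>UNIV. cnj ((\<chi> a. L.et a (z, f z)) $ c) * dWb c H (z, f z))"
        by (rule leaf_chain(2)[OF L.smd[OF smH tS[OF z]] fd[OF z]])
      also have "\<dots> = - (dZb (dW a (L.et r)) p + (\<Sum>c\<in>UNIV. L.etb c p * dWb c (dW a (L.et r)) p))"
      proof -
        have d: "dW a (L.et r) differentiable (at p)" by (rule L.smd[OF L.smD[OF isop_dW L.smet] pS])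
        show ?thesis unfolding H_def p_def[symmetric] isop_minus[OF isop_dZb d] isop_minus[OF isop_dWb d]
          by (simp add: L.etb_eq sum_negf)
      qed
      also have "\<dots> = (\<Sum>i\<in>UNIV. dWb i (L.et r) p * dW a (L.etb i) p)"
        unfolding L.curv_formula[OF pS] by simp
      finally show ?thesis unfolding leaf_curv_def by simp
    qed
    show "leaf_curv g0 \<phi> f r a z = - (\<Sum>i\<in>UNIV. dWb i (eta g0 \<phi> r) (z, f z) * dW a (etab g0 \<phi> i) (z, f z))" for r a
      using curv[of r a] unfolding p_def L.et_def L.etb_def .
    define A where "A a i = dWb i (L.et a) p" for a i
    have F: "leaf_curv g0 \<phi> f a b z = - (\<Sum>i\<in>UNIV. A a i * cnj (A i b))" for a b
    proof -
      have "dW b (L.etb i) p = cnj (A i b)" for i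
      proof -
        have "cnj (A i b) = dW b (\<lambda>q. cnj (L.et i q)) p" unfolding A_def by (rule cnj_dWb[OF L.smd[OF L.smet pS]])
        then show ?thesis by (simp add: L.etb_eq)
      qed
      then show ?thesis unfolding curv A_def by simp
    qed
    have symB: "(\<Sum>a\<in>UNIV. A a i * L.gg a c p) = (\<Sum>a\<in>UNIV. A a c * L.gg a i p)" for i c
      unfolding A_def by (rule L.symB[OF pS])
    fix s :: "complex^'n"
    define v where "v = (\<chi> i. \<Sum>c\<in>UNIV. A i c * cnj (s$c))"
    have T: "(\<Sum>a\<in>UNIV. \<Sum>b\<in>UNIV. \<Sum>c\<in>UNIV. leaf_curv g0 \<phi> f a b z * s$b * cnj (s$c) * gmet g0 \<phi> (z, f z) a c)
        = - (\<Sum>a\<in>UNIV. \<Sum>i\<in>UNIV. L.gg a i p * v $a * cnj (v $i))"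
      unfolding F p_def[symmetric] L.gg_def[symmetric] v_def by (rule alg_form[OF symB])
    have Q: "Im (\<Sum>a\<in>UNIV. \<Sum>i\<in>UNIV. L.gg a i p * v $a * cnj (v $i)) = 0"
      by (rule qform_real) (rule L.gg_herm[OF pS])
    have R: "Re (\<Sum>a\<in>UNIV. \<Sum>i\<in>UNIV. L.gg a i p * v $a * cnj (v $i)) \<ge> 0"
    proof (cases "v = 0")
      case True then show ?thesis by simp
    next
      case False then show ?thesis using L.posS[OF pS False] by simp
    qed
    show "Im (\<Sum>a\<in>UNIV. \<Sum>b\<in>UNIV. \<Sum>c\<in>UNIV. leaf_curv g0 \<phi> f a b z * s$b * cnj (s$c) * gmet g0 \<phi> (z, f z) a c) = 0"
      unfolding T using Q by simp
    show "Re (\<Sum>a\<in>UNIV. \<Sum>b\<in>UNIV. \<Sum>c\<in>UNIV. leaf_curv g0 \<phi> f a b z * s$b * cnj (s$c) * gmet g0 \<phi> (z, f z) a c) \<le> 0"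
      unfolding T using R by simp
  qed
qed

end
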